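(* Let $n$ be a positive integer, $\pi_1,\pi_2\in\mathrm{NC}_B(n)$, $\psi(\pi_1)=(\sigma_1,x_1)$ and $\psi(\pi_2)=(\sigma_2,x_2)$. Then $\pi_1\le\pi_2$ if and only if $\sigma_1\le\sigma_2$ and one of the following holds: (1) $x_1=x_2=\emptyset$; (2) $x_2$ is an edge $(a,b)$ of $\sigma_2$, and $x_1$ is the unique minimal length edge $(i,j)$ of $\sigma_1$ with $i\le a<b\le j$ if such an edge exists, and $x_1=\emptyset$ otherwise; (3) $x_2$ is a block of $\sigma_2$ and $x_1$ is a block of $\sigma_1$ with $x_1\subseteq x_2$; (4) $x_2$ is a block of $\sigma_2$ and $x_1$ is an edge $(i,j)$ of $\sigma_1$ with $i,j\in x_2$; (5) $x_2$ is a block of $\sigma_2$, and $x_1$ is the minimal length edge $(i,j)$ of $\sigma_1$ with $i<\min(x_2)\le\max(x_2)<j$ if such an edge exists, and $x_1=\emptyset$ otherwise.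
   Context: $[\pm n]=\{1,\dots,n,-1,\dots,-n\}$. A partition of type $B_n$ is a partition $\pi$ of $[\pm n]$ such that $-B$ is a block whenever $B$ is, with at most one block (zero block) satisfying $B=-B$; it is noncrossing if, in the linear order $1<\cdots<n<-1<\cdots<-n$, there are no $a<b<c<d$ with $a,c$ in one block and $b,d$ in another. $\mathrm{NC}_B(n)$ is the set of these, ordered by refinement; $\mathrm{NC}(n)$ is the poset of noncrossing partitions of $[n]$ ordered by refinement. An edge of $\sigma\in\mathrm{NC}(n)$ is a pair $(i,j)$, $i<j$, with $i,j$ in a common block containing no integer strictly between them; its length is $j-i$. The map $\psi$: given $\pi\in\mathrm{NC}_B(n)$, let $\eta\in\mathrm{NC}(n)$ be obtained by deleting all negative integers from the blocks of $\pi$ (discarding empty sets), and let $X$ be the set of blocks $A$ of $\eta$ such that the block of $\pi$ containing $A$ also contains a negative integer. Write $X=\{A_1,\dots,A_m\}$ with $\max A_1<\cdots<\max A_m$. Let $\sigma$ be obtained from $\eta$ by merging $A_i$ and $A_{m+1-i}$ for $i=1,\dots,\lfloor m/2\rfloor$, and let $x=\emptyset$ if $m=0$, $x=(\max A_{m/2},\min A_{m/2+1})$ if $m>0$ is even, and $x=A_{(m+1)/2}$ if $m$ is odd. Then $\psi(\pi)=(\sigma,x)$. *)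

theory Defs
  imports Main
begin

text \<open>Ground set [+-n] = {1..n, -1..-n}, represented as nonzero integers of absolute value at most n.\<close>
definition signed_set :: "nat \<Rightarrow> int set" where
  "signed_set n = {k. k \<noteq> 0 \<and> \<bar>k\<bar> \<le> int n}"

text \<open>Position in the linear order 1 < ... < n < -1 < ... < -n.\<close>
definition rankB :: "nat \<Rightarrow> int \<Rightarrow> int" where
  "rankB n k = (if k > 0 then k else int n - k)"

definition is_set_partition :: "'a set \<Rightarrow> 'a set set \<Rightarrow> bool" where
  "is_set_partition S P \<longleftrightarrow>
     (\<forall>B\<in>P. B \<noteq> {}) \<and> \<Union>P = S \<and> (\<forall>B\<in>P. \<forall>C\<in>P. B \<noteq> C \<longrightarrow> B \<inter> C = {})"

definition noncrossing_wrt :: "('a \<Rightarrow> int) \<Rightarrow> 'a set set \<Rightarrow> bool" where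
  "noncrossing_wrt r P \<longleftrightarrow>
     \<not> (\<exists>B1\<in>P. \<exists>B2\<in>P. B1 \<noteq> B2 \<and>
          (\<exists>a b c d. a \<in> B1 \<and> c \<in> B1 \<and> b \<in> B2 \<and> d \<in> B2 \<and>
                     r a < r b \<and> r b < r c \<and> r c < r d))"

definition NCB :: "nat \<Rightarrow> int set set set" where
  "NCB n = {P. is_set_partition (signed_set n) P
              \<and> (\<forall>B\<in>P. uminus ` B \<in> P)
              \<and> (\<forall>B\<in>P. \<forall>C\<in>P. uminus ` B = B \<and> uminus ` C = C \<longrightarrow> B = C)
              \<and> noncrossing_wrt (rankB n) P}"

definition NC :: "nat \<Rightarrow> int set set set" where
  "NC n = {P. is_set_partition {1..int n} P \<and> noncrossing_wrt id P}"

definition refines :: "'a set set \<Rightarrow> 'a set set \<Rightarrow> bool" where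
  "refines P Q \<longleftrightarrow> (\<forall>B\<in>P. \<exists>C\<in>Q. B \<subseteq> C)"

definition is_edge :: "int set set \<Rightarrow> int \<Rightarrow> int \<Rightarrow> bool" where
  "is_edge \<sigma> i j \<longleftrightarrow> i < j \<and> (\<exists>B\<in>\<sigma>. i \<in> B \<and> j \<in> B \<and> (\<forall>k\<in>B. \<not> (i < k \<and> k < j)))"

datatype xval = XEmpty | XEdge int int | XBlock "int set"

text \<open>A_i (1-based) : the block of X with the i-th smallest maximum.\<close>
definition A_of :: "int set set \<Rightarrow> nat \<Rightarrow> int set" where
  "A_of X i = (THE A. A \<in> X \<and> Max A = sorted_list_of_set (Max ` X) ! (i - 1))"

definition psi :: "nat \<Rightarrow> int set set \<Rightarrow> int set set \<times> xval" where
  "psi n \<pi> =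
    (let \<eta> = {B \<inter> {1..int n} | B. B \<in> \<pi>} - {{}};
         X = {A \<in> \<eta>. \<exists>B\<in>\<pi>. A \<subseteq> B \<and> (\<exists>k\<in>B. k < 0)};
         m = card X;
         A = A_of X;
         \<sigma> = (\<eta> - {A i | i. 1 \<le> i \<and> i \<le> m div 2} - {A (m + 1 - i) | i. 1 \<le> i \<and> i \<le> m div 2})
              \<union> {A i \<union> A (m + 1 - i) | i. 1 \<le> i \<and> i \<le> m div 2};
         x = (if m = 0 then XEmpty
              else if even m then XEdge (Max (A (m div 2))) (Min (A (m div 2 + 1)))
              else XBlock (A ((m + 1) div 2)))
     in (\<sigma>, x))"

end

theory Submission
  imports Defs
begin

definition pp :: "int set \<Rightarrow> int set" where "pp B = {k\<in>B. 0<k}"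
definition nq :: "int set \<Rightarrow> int set" where "nq B = {k. 0<k \<and> -k\<in>B}"
definition mixed :: "int set \<Rightarrow> bool" where "mixed B \<longleftrightarrow> pp B \<noteq> {} \<and> nq B \<noteq> {}"
definition lower :: "int set \<Rightarrow> bool" where
  "lower B \<longleftrightarrow> mixed B \<and> (\<forall>p\<in>pp B. \<forall>q\<in>nq B. p < q)"

lemma pp_neg[simp]: "pp (uminus ` B) = nq B" unfolding pp_def nq_def by force
lemma nq_neg[simp]: "nq (uminus ` B) = pp B" unfolding pp_def nq_def by force
lemma neg_neg[simp]: "uminus ` uminus ` (B::int set) = B" by (simp add: image_image)
lemma abs_neg[simp]: "abs ` uminus ` (B::int set) = abs ` B" by (force simp: image_image)
lemma mixed_neg[simp]: "mixed (uminus ` B) = mixed B" unfolding mixed_def by auto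

locale ncb =
  fixes n :: nat and P :: "int set set"
  assumes inP: "P \<in> NCB n"
begin

lemma allc: "is_set_partition (signed_set n) P \<and> (\<forall>B\<in>P. uminus ` B \<in> P)
              \<and> (\<forall>B\<in>P. \<forall>C\<in>P. uminus ` B = B \<and> uminus ` C = C \<longrightarrow> B = C)
              \<and> noncrossing_wrt (rankB n) P"
  using inP unfolding NCB_def by (rule CollectD)
lemma part: "is_set_partition (signed_set n) P" using allc by (rule conjunct1)
lemma negc: "B \<in> P \<Longrightarrow> uminus ` B \<in> P" using conjunct1[OF conjunct2[OF allc]] by (rule bspec)
lemma zuniq: "B \<in> P \<Longrightarrow> C \<in> P \<Longrightarrow> uminus ` B = B \<Longrightarrow> uminus ` C = C \<Longrightarrow> B = C"
  using conjunct1[OF conjunct2[OF conjunct2[OF allc]]] by blast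
lemma nc: "noncrossing_wrt (rankB n) P" using conjunct2[OF conjunct2[OF conjunct2[OF allc]]] .

lemma blk_ne: "B \<in> P \<Longrightarrow> B \<noteq> {}" using part by (auto simp: is_set_partition_def)
lemma blk_sub: "B \<in> P \<Longrightarrow> B \<subseteq> signed_set n" using part by (auto simp: is_set_partition_def)
lemma blk_el: "B \<in> P \<Longrightarrow> k \<in> B \<Longrightarrow> k \<noteq> 0 \<and> \<bar>k\<bar> \<le> int n"
  using blk_sub by (auto simp: signed_set_def)
lemma blk_eq: "B \<in> P \<Longrightarrow> C \<in> P \<Longrightarrow> k \<in> B \<Longrightarrow> k \<in> C \<Longrightarrow> B = C"
  using part unfolding is_set_partition_def by blast
lemma cover: "k \<noteq> 0 \<Longrightarrow> \<bar>k\<bar> \<le> int n \<Longrightarrow> \<exists>B\<in>P. k \<in> B"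
proof -
  assume "k \<noteq> 0" "\<bar>k\<bar> \<le> int n"
  hence "k \<in> signed_set n" by (simp add: signed_set_def)
  moreover have "\<Union>P = signed_set n" using part by (simp add: is_set_partition_def)
  ultimately show ?thesis by blast
qed
lemma fin_blk: "B \<in> P \<Longrightarrow> finite B"
proof -
  assume "B \<in> P"
  hence "B \<subseteq> {-int n..int n}" using blk_el by force
  thus ?thesis using finite_subset by blast
qed
lemma finP: "finite P"
proof -
  have "P \<subseteq> Pow (signed_set n)" using blk_sub by auto
  moreover have "signed_set n \<subseteq> {-int n..int n}" by (auto simp: signed_set_def)
  ultimately show ?thesis by (meson finite_Pow_iff finite_atLeastAtMost_int finite_subset)
qed

lemma CR: "B1 \<in> P \<Longrightarrow> B2 \<in> P \<Longrightarrow> B1 \<noteq> B2 \<Longrightarrow> a \<in> B1 \<Longrightarrow> c \<in> B1 \<Longrightarrow> b \<in> B2 \<Longrightarrow> d \<in> B2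
  \<Longrightarrow> rankB n a < rankB n b \<Longrightarrow> rankB n b < rankB n c \<Longrightarrow> rankB n c < rankB n d \<Longrightarrow> False"
proof -
  assume h: "B1 \<in> P" "B2 \<in> P" "B1 \<noteq> B2" "a \<in> B1" "c \<in> B1" "b \<in> B2" "d \<in> B2"
    "rankB n a < rankB n b" "rankB n b < rankB n c" "rankB n c < rankB n d"
  have "\<exists>B1\<in>P. \<exists>B2\<in>P. B1 \<noteq> B2 \<and>
          (\<exists>a b c d. a \<in> B1 \<and> c \<in> B1 \<and> b \<in> B2 \<and> d \<in> B2 \<and>
                     rankB n a < rankB n b \<and> rankB n b < rankB n c \<and> rankB n c < rankB n d)"
    apply (rule bexI[OF _ h(1)], rule bexI[OF _ h(2)])
    apply (rule conjI[OF h(3)])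
    apply (rule exI[of _ a], rule exI[of _ b], rule exI[of _ c], rule exI[of _ d])
    using h by simp
  thus False using nc unfolding noncrossing_wrt_def by (rule notE[rotated])
qed

lemma CR1: "B1 \<in> P \<Longrightarrow> B2 \<in> P \<Longrightarrow> B1 \<noteq> B2 \<Longrightarrow> a \<in> B1 \<Longrightarrow> c \<in> B1 \<Longrightarrow> b \<in> B2 \<Longrightarrow> d \<in> B2
  \<Longrightarrow> 0 < a \<Longrightarrow> a < b \<Longrightarrow> b < c \<Longrightarrow> d < 0 \<Longrightarrow> False"
  using CR[of B1 B2 a c b d] blk_el[of B1 c] by (auto simp: rankB_def)

lemma CR2: "B1 \<in> P \<Longrightarrow> B2 \<in> P \<Longrightarrow> B1 \<noteq> B2 \<Longrightarrow> a \<in> B1 \<Longrightarrow> c \<in> B1 \<Longrightarrow> b \<in> B2 \<Longrightarrow> d \<in> B2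
  \<Longrightarrow> 0 < a \<Longrightarrow> b < 0 \<Longrightarrow> c < 0 \<Longrightarrow> d < 0 \<Longrightarrow> -b < -c \<Longrightarrow> -c < -d \<Longrightarrow> False"
  using CR[of B1 B2 a c b d] blk_el[of B1 a] by (auto simp: rankB_def)

lemma CR3: "B1 \<in> P \<Longrightarrow> B2 \<in> P \<Longrightarrow> B1 \<noteq> B2 \<Longrightarrow> a \<in> B1 \<Longrightarrow> c \<in> B1 \<Longrightarrow> b \<in> B2 \<Longrightarrow> d \<in> B2
  \<Longrightarrow> 0 < a \<Longrightarrow> a < b \<Longrightarrow> c < 0 \<Longrightarrow> d < 0 \<Longrightarrow> -c < -d \<Longrightarrow> False"
  using CR[of B1 B2 a c b d] blk_el[of B2 b] by (auto simp: rankB_def)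

end


lemma nth_sorted_card:
  fixes S :: "int set"
  assumes "finite S" "s \<in> S"
  shows "sorted_list_of_set S ! card {t\<in>S. t < s} = s"
proof -
  let ?L = "sorted_list_of_set S"
  have sw: "sorted_wrt (<) ?L" by (simp add: assms(1))
  have dist: "distinct ?L" by simp
  obtain k where k: "k < length ?L" "?L ! k = s" using assms by (metis in_set_conv_nth set_sorted_list_of_set)
  have "{t\<in>S. t < s} = set (take k ?L)"
  proof
    show "{t\<in>S. t < s} \<subseteq> set (take k ?L)"
    proof
      fix t assume t: "t \<in> {t\<in>S. t < s}"
      then obtain j where j: "j < length ?L" "?L ! j = t" using assms by (metis in_set_conv_nth mem_Collect_eq set_sorted_list_of_set)
      have "j < k"
      proof (rule ccontr)
        assume "\<not> j < k"
        hence "k \<le> j" by simp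
        hence "?L ! k \<le> ?L ! j" using sw j(1) by (metis sorted_iff_nth_mono sorted_list_of_set(2))
        thus False using t j k by auto
      qed
      thus "t \<in> set (take k ?L)" using j k by (metis in_set_conv_nth length_take min.absorb4 min_less_iff_conj nth_take)
    qed
    show "set (take k ?L) \<subseteq> {t\<in>S. t < s}"
    proof
      fix t assume "t \<in> set (take k ?L)"
      then obtain j where j: "j < k" "?L ! j = t" using k by (auto simp: in_set_conv_nth)
      have "?L ! j < ?L ! k" using sorted_wrt_nth_less[OF sw j(1)] k(1) by simp
      thus "t \<in> {t\<in>S. t < s}" using j k assms
        by (metis (mono_tags, lifting) dual_order.strict_trans mem_Collect_eq nth_mem set_sorted_list_of_set)
    qed
  qed
  hence "card {t\<in>S. t < s} = k" using dist k by (simp add: distinct_card)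
  thus ?thesis using k by simp
qed

lemma rank_rev:
  fixes g :: "'a \<Rightarrow> int"
  assumes fin: "finite X" and inj: "inj_on g X" and fX: "\<And>x. x \<in> X \<Longrightarrow> f x \<in> X"
    and inv: "\<And>x. x \<in> X \<Longrightarrow> f (f x) = x"
    and anti: "\<And>x y. x \<in> X \<Longrightarrow> y \<in> X \<Longrightarrow> g x < g y \<Longrightarrow> g (f y) < g (f x)"
    and x: "x \<in> X"
  shows "card {y\<in>X. g y < g (f x)} = card X - 1 - card {y\<in>X. g y < g x}"
proof -
  have eq: "{y\<in>X. g y < g (f x)} = f ` {y\<in>X. g x < g y}"
  proof
    show "{y\<in>X. g y < g (f x)} \<subseteq> f ` {y\<in>X. g x < g y}"
    proof
      fix y assume y: "y \<in> {y\<in>X. g y < g (f x)}"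
      have "g x < g (f y)"
      proof -
        have "g (f (f x)) < g (f y)" using anti[of y "f x"] y fX x by auto
        thus ?thesis using inv x by simp
      qed
      moreover have "y = f (f y)" using inv y by auto
      ultimately show "y \<in> f ` {y\<in>X. g x < g y}" using y fX by blast
    qed
    show "f ` {y\<in>X. g x < g y} \<subseteq> {y\<in>X. g y < g (f x)}" using anti x fX by auto
  qed
  have injf: "inj_on f X"
  proof (rule inj_onI)
    fix u v assume "u \<in> X" "v \<in> X" "f u = f v"
    hence "f (f u) = f (f v)" by simp
    thus "u = v" using inv[of u] inv[of v] \<open>u \<in> X\<close> \<open>v \<in> X\<close> by argo
  qed
  have c1: "card {y\<in>X. g y < g (f x)} = card {y\<in>X. g x < g y}"
    unfolding eq by (rule card_image, rule inj_on_subset[OF injf]) auto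
  have split: "X = ({y\<in>X. g y < g x} \<union> {y\<in>X. g x < g y}) \<union> {x}"
  proof
    show "X \<subseteq> ({y\<in>X. g y < g x} \<union> {y\<in>X. g x < g y}) \<union> {x}"
    proof
      fix y assume y: "y \<in> X"
      show "y \<in> ({y\<in>X. g y < g x} \<union> {y\<in>X. g x < g y}) \<union> {x}"
      proof (cases "g y = g x")
        case True thus ?thesis using inj y x by (simp add: inj_on_def)
      next
        case False thus ?thesis using y by (simp add: linorder_neq_iff)
      qed
    qed
  qed (use x in auto)
  have d1: "{y\<in>X. g y < g x} \<inter> {y\<in>X. g x < g y} = {}" by auto
  have d2: "({y\<in>X. g y < g x} \<union> {y\<in>X. g x < g y}) \<inter> {x} = {}" by auto
  have "card X = card ({y\<in>X. g y < g x} \<union> {y\<in>X. g x < g y}) + card {x}"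
    by (subst split, rule card_Un_disjoint[OF _ _ d2]) (use fin in auto)
  also have "card ({y\<in>X. g y < g x} \<union> {y\<in>X. g x < g y}) = card {y\<in>X. g y < g x} + card {y\<in>X. g x < g y}"
    by (rule card_Un_disjoint[OF _ _ d1]) (use fin in auto)
  finally have "card X = card {y\<in>X. g y < g x} + 1 + card {y\<in>X. g x < g y}" by simp
  thus ?thesis using c1 by simp
qed


definition inner :: "int set set \<Rightarrow> int \<Rightarrow> int \<Rightarrow> bool" where
  "inner P a b \<longleftrightarrow> (\<exists>B0\<in>P. lower B0 \<and> a \<in> pp B0 \<and> b \<in> nq B0)
     \<and> (\<forall>B\<in>P. lower B \<longrightarrow> (\<forall>p\<in>pp B. p \<le> a) \<and> (\<forall>q\<in>nq B. b \<le> q))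
     \<and> (\<forall>Z\<in>P. uminus ` Z \<noteq> Z)"

context ncb begin

lemma absB: "B \<in> P \<Longrightarrow> abs ` B = pp B \<union> nq B"
proof
  assume B: "B \<in> P"
  show "abs ` B \<subseteq> pp B \<union> nq B"
  proof
    fix x assume "x \<in> abs ` B"
    then obtain k where k: "k \<in> B" "x = \<bar>k\<bar>" by auto
    have "k \<noteq> 0" using blk_el[OF B k(1)] by simp
    show "x \<in> pp B \<union> nq B"
    proof (cases "k > 0")
      case True thus ?thesis using k by (simp add: pp_def)
    next
      case False hence "k < 0" using \<open>k \<noteq> 0\<close> by simp
      thus ?thesis using k by (simp add: nq_def)
    qed
  qed
  show "pp B \<union> nq B \<subseteq> abs ` B"
  proof
    fix x assume "x \<in> pp B \<union> nq B"
    thus "x \<in> abs ` B"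
    proof
      assume "x \<in> pp B" thus ?thesis by (force simp: pp_def)
    next
      assume "x \<in> nq B" hence "-x \<in> B" "x > 0" by (auto simp: nq_def)
      thus ?thesis by (metis abs_minus_cancel abs_of_pos imageI)
    qed
  qed
qed

lemma ppD: "p \<in> pp B \<Longrightarrow> p \<in> B \<and> 0 < p" by (simp add: pp_def)
lemma nqD: "q \<in> nq B \<Longrightarrow> -q \<in> B \<and> 0 < q" by (simp add: nq_def)
lemma ppI: "p \<in> B \<Longrightarrow> 0 < p \<Longrightarrow> p \<in> pp B" by (simp add: pp_def)
lemma nqI: "-q \<in> B \<Longrightarrow> 0 < q \<Longrightarrow> q \<in> nq B" by (simp add: nq_def)
lemma negI: "(k::int) \<in> B \<Longrightarrow> -k \<in> uminus ` B" by simp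
lemma negI2: "-(k::int) \<in> B \<Longrightarrow> k \<in> uminus ` B" by force
lemma negD: "(k::int) \<in> uminus ` B \<Longrightarrow> -k \<in> B" by force

lemma fin_pp: "B \<in> P \<Longrightarrow> finite (pp B)"
  using fin_blk[of B] by (simp add: pp_def)
lemma fin_nq: "B \<in> P \<Longrightarrow> finite (nq B)"
  using fin_pp[OF negc] by (metis pp_neg)

lemma pp_nq_disj: "B \<in> P \<Longrightarrow> uminus ` B \<noteq> B \<Longrightarrow> k \<in> pp B \<Longrightarrow> k \<in> nq B \<Longrightarrow> False"
proof -
  assume B: "B \<in> P" "uminus ` B \<noteq> B" "k \<in> pp B" "k \<in> nq B"
  have "k \<in> B" using ppD[OF B(3)] by simp
  moreover have "k \<in> uminus ` B" using nqD[OF B(4)] negI[of "-k" B] by simp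
  ultimately have "B = uminus ` B" using blk_eq[OF B(1) negc[OF B(1)]] by blast
  thus False using B(2) by simp
qed

lemma pat1: "B \<in> P \<Longrightarrow> uminus ` B \<noteq> B \<Longrightarrow> p \<in> pp B \<Longrightarrow> p' \<in> pp B \<Longrightarrow> q \<in> nq B
   \<Longrightarrow> p < q \<Longrightarrow> q < p' \<Longrightarrow> False"
proof -
  assume h: "B \<in> P" "uminus ` B \<noteq> B" "p \<in> pp B" "p' \<in> pp B" "q \<in> nq B" "p < q" "q < p'"
  have "q \<in> uminus ` B" using nqD[OF h(5)] negI[of "-q" B] by simp
  moreover have "-p \<in> uminus ` B" using ppD[OF h(3)] by simp
  ultimately show False using CR1[OF h(1) negc[OF h(1)] h(2)[symmetric], of p p' q "-p"] ppD[OF h(3)] ppD[OF h(4)] h(6,7)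
    by auto
qed

lemma pat2: "B \<in> P \<Longrightarrow> uminus ` B \<noteq> B \<Longrightarrow> q \<in> nq B \<Longrightarrow> q' \<in> nq B \<Longrightarrow> p \<in> pp B
   \<Longrightarrow> q < p \<Longrightarrow> p < q' \<Longrightarrow> False"
proof -
  assume h: "B \<in> P" "uminus ` B \<noteq> B" "q \<in> nq B" "q' \<in> nq B" "p \<in> pp B" "q < p" "p < q'"
  have "uminus ` B \<in> P" using negc[OF h(1)] .
  moreover have "pp (uminus ` B) = nq B" "nq (uminus ` B) = pp B" by simp_all
  moreover have "uminus ` (uminus ` B) \<noteq> uminus ` B" using h(2) by auto
  ultimately show False using pat1[of "uminus ` B" q q' p] h by auto
qed

lemma sep: "B \<in> P \<Longrightarrow> mixed B \<Longrightarrow> uminus ` B \<noteq> B \<Longrightarrow> lower B \<or> lower (uminus ` B)"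
proof -
  assume h: "B \<in> P" "mixed B" "uminus ` B \<noteq> B"
  have ne: "pp B \<noteq> {}" "nq B \<noteq> {}" using h(2) by (auto simp: mixed_def)
  define p0 where "p0 = Min (pp B)"
  define q0 where "q0 = Min (nq B)"
  have p0: "p0 \<in> pp B" "\<And>p. p \<in> pp B \<Longrightarrow> p0 \<le> p" using fin_pp[OF h(1)] ne unfolding p0_def by auto
  have q0: "q0 \<in> nq B" "\<And>q. q \<in> nq B \<Longrightarrow> q0 \<le> q" using fin_nq[OF h(1)] ne unfolding q0_def by auto
  have "p0 \<noteq> q0" using pp_nq_disj[OF h(1) h(3) p0(1)] q0(1) by auto
  hence "p0 < q0 \<or> q0 < p0" by auto
  thus ?thesis
  proof
    assume lt: "p0 < q0"
    have "lower B" unfolding lower_def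
    proof (intro conjI ballI)
      show "mixed B" by fact
      fix p q assume pq: "p \<in> pp B" "q \<in> nq B"
      show "p < q"
      proof (rule ccontr)
        assume "\<not> p < q"
        moreover have "p \<noteq> q" using pp_nq_disj[OF h(1) h(3) pq(1)] pq(2) by auto
        ultimately have "q < p" by simp
        thus False using pat1[OF h(1) h(3) p0(1) pq(1) pq(2)] lt q0(2)[OF pq(2)] by simp
      qed
    qed
    thus ?thesis by simp
  next
    assume lt: "q0 < p0"
    have "lower (uminus ` B)" unfolding lower_def
    proof (intro conjI ballI)
      show "mixed (uminus ` B)" using h(2) by simp
      fix p q assume pq: "p \<in> pp (uminus ` B)" "q \<in> nq (uminus ` B)"
      hence pq': "p \<in> nq B" "q \<in> pp B" by simp_all
      show "p < q"
      proof (rule ccontr)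
        assume "\<not> p < q"
        moreover have "p \<noteq> q" using pp_nq_disj[OF h(1) h(3) pq'(2)] pq'(1) by auto
        ultimately have "q < p" by simp
        thus False using pat2[OF h(1) h(3) q0(1) pq'(1) pq'(2)] lt p0(2)[OF pq'(2)] by simp
      qed
    qed
    thus ?thesis by simp
  qed
qed

lemma zero_of_eq: "B \<in> P \<Longrightarrow> pp B = nq B \<Longrightarrow> uminus ` B = B"
proof -
  assume h: "B \<in> P" "pp B = nq B"
  have sub: "uminus ` B \<subseteq> B"
  proof
    fix x assume "x \<in> uminus ` B"
    then obtain k where k: "k \<in> B" "x = -k" by auto
    have "k \<noteq> 0" using blk_el[OF h(1) k(1)] by simp
    show "x \<in> B"
    proof (cases "k > 0")
      case True
      hence "k \<in> nq B" using k h(2) ppI[of k B] by simp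
      thus ?thesis using k nqD by simp
    next
      case False hence "-k > 0" using \<open>k \<noteq> 0\<close> by simp
      hence "-k \<in> pp B" using k h(2) nqI[of "-k" B] by simp
      thus ?thesis using k ppD by simp
    qed
  qed
  hence "uminus ` uminus ` B \<subseteq> uminus ` B" by (rule image_mono)
  thus ?thesis using sub by simp
qed

lemma eq_of_zero: "uminus ` B = B \<Longrightarrow> pp B = nq B"
  by (metis pp_neg)

lemma lower_not_zero: "lower B \<Longrightarrow> uminus ` B \<noteq> B"
proof
  assume h: "lower B" "uminus ` B = B"
  then obtain p where p: "p \<in> pp B" unfolding lower_def mixed_def by auto
  have "p \<in> nq B" using eq_of_zero[OF h(2)] p by simp
  thus False using h(1) p unfolding lower_def by auto
qed

lemma AT: "B1 \<in> P \<Longrightarrow> B2 \<in> P \<Longrightarrow> mixed B1 \<Longrightarrow> mixed B2 \<Longrightarrow> Max (pp B1) < Max (pp B2)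
   \<Longrightarrow> Max (nq B2) < Max (nq B1)"
proof -
  assume h: "B1 \<in> P" "B2 \<in> P" "mixed B1" "mixed B2" "Max (pp B1) < Max (pp B2)"
  show ?thesis
  proof (cases "B2 = uminus ` B1")
    case True thus ?thesis using h(5) by simp
  next
    case False
    have ne: "pp B1 \<noteq> {}" "nq B1 \<noteq> {}" "pp B2 \<noteq> {}" "nq B2 \<noteq> {}" using h(3,4) by (auto simp: mixed_def)
    define p1 where "p1 = Max (pp B1)"
    define p2 where "p2 = Max (pp B2)"
    define q1 where "q1 = Max (nq B1)"
    define q2 where "q2 = Max (nq B2)"
    have m: "p1 \<in> pp B1" "p2 \<in> pp B2" "q1 \<in> nq B1" "q2 \<in> nq B2"
      unfolding p1_def p2_def q1_def q2_def using ne fin_pp fin_nq h(1,2) by auto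
    have "B1 \<noteq> B2" using h(5) by auto
    have "q1 \<noteq> q2"
    proof
      assume "q1 = q2"
      hence "-q1 \<in> B1" "-q1 \<in> B2" using m nqD by auto
      thus False using blk_eq[OF h(1,2)] \<open>B1 \<noteq> B2\<close> by blast
    qed
    moreover have "\<not> q1 < q2"
    proof
      assume "q1 < q2"
      thus False using CR3[OF h(1,2) \<open>B1 \<noteq> B2\<close>, of p1 "-q1" p2 "-q2"] m ppD nqD h(5)
        unfolding p1_def p2_def by auto
    qed
    ultimately show ?thesis unfolding q1_def q2_def by simp
  qed
qed

lemma zero_lower: "Z \<in> P \<Longrightarrow> uminus ` Z = Z \<Longrightarrow> B \<in> P \<Longrightarrow> lower B \<Longrightarrow> c \<in> pp Z
   \<Longrightarrow> (\<forall>p\<in>pp B. p < c) \<and> (\<forall>q\<in>nq B. c < q)"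
proof -
  assume h: "Z \<in> P" "uminus ` Z = Z" "B \<in> P" "lower B" "c \<in> pp Z"
  have BZ: "B \<noteq> Z" using lower_not_zero[OF h(4)] h(2) by auto
  have cZ: "c \<in> Z" "-c \<in> Z" "0 < c" using h(5) eq_of_zero[OF h(2)] ppD nqD by auto
  obtain p0 q0 where pq0: "p0 \<in> pp B" "q0 \<in> nq B" using h(4) unfolding lower_def mixed_def by auto
  have low: "\<And>p q. p \<in> pp B \<Longrightarrow> q \<in> nq B \<Longrightarrow> p < q" using h(4) unfolding lower_def by auto
  have A: "\<forall>p\<in>pp B. p < c"
  proof
    fix p assume p: "p \<in> pp B"
    show "p < c"
    proof (rule ccontr)
      assume "\<not> p < c"
      moreover have "p \<noteq> c" using p cZ ppD blk_eq[OF h(3) h(1)] BZ by blast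
      ultimately have "c < p" by simp
      thus False using CR3[OF h(1) h(3) BZ[symmetric], of c "-c" p "-q0"] cZ ppD[OF p] nqD[OF pq0(2)] low[OF p pq0(2)]
        by auto
    qed
  qed
  have Bq: "\<And>q. q \<in> nq B \<Longrightarrow> q \<in> uminus ` B" using nqD negI by (metis minus_minus)
  have "\<forall>q\<in>nq B. c < q"
  proof
    fix q assume q: "q \<in> nq B"
    have nB: "uminus ` B \<in> P" using negc[OF h(3)] .
    have nBZ: "uminus ` B \<noteq> Z" using BZ h(2) by (metis neg_neg)
    show "c < q"
    proof (rule ccontr)
      assume "\<not> c < q"
      moreover have "q \<noteq> c" using Bq[OF q] cZ blk_eq[OF nB h(1)] nBZ by blast
      ultimately have "q < c" by simp
      thus False using CR3[OF nB h(1) nBZ, of q "-p0" c "-c"] Bq[OF q] cZ ppD[OF pq0(1)] nqD[OF q] A pq0(1)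
        by auto
    qed
  qed
  thus ?thesis using A by simp
qed

lemma zero_between: "Z \<in> P \<Longrightarrow> uminus ` Z = Z \<Longrightarrow> C \<in> P \<Longrightarrow> C \<noteq> Z \<Longrightarrow> u \<in> C \<Longrightarrow> v \<in> C
   \<Longrightarrow> 0 < u \<Longrightarrow> u < c \<Longrightarrow> c < v \<Longrightarrow> c \<in> pp Z \<Longrightarrow> False"
proof -
  assume h: "Z \<in> P" "uminus ` Z = Z" "C \<in> P" "C \<noteq> Z" "u \<in> C" "v \<in> C" "0 < u" "u < c" "c < v" "c \<in> pp Z"
  have cZ: "c \<in> Z" "-c \<in> Z" "0 < c" using h(10) eq_of_zero[OF h(2)] ppD nqD by auto
  show False using CR1[OF h(3) h(1) h(4), of u v c "-c"] h cZ by auto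
qed

lemma noUV: "inner P a b \<Longrightarrow> C \<in> P \<Longrightarrow> u \<in> C \<Longrightarrow> v \<in> C \<Longrightarrow> 0 < u \<Longrightarrow> u \<le> a \<Longrightarrow> b \<le> v \<Longrightarrow> False"
proof -
  assume h: "inner P a b" "C \<in> P" "u \<in> C" "v \<in> C" "0 < u" "u \<le> a" "b \<le> v"
  obtain B0 where B0: "B0 \<in> P" "lower B0" "a \<in> pp B0" "b \<in> nq B0" using h(1) unfolding inner_def by blast
  have ab: "a < b" using B0 unfolding lower_def by auto
  have aB: "a \<in> B0" "-b \<in> B0" using B0 ppD nqD by auto
  show False
  proof (cases "C = B0")
    case True
    hence "v \<in> pp B0" using h ab ppI[of v B0] by simp
    hence "v \<le> a" using h(1) B0 unfolding inner_def by auto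
    thus False using ab h by simp
  next
    case False
    have "u \<noteq> a" using blk_eq[OF h(2) B0(1)] False h(3) aB by blast
    thus False using CR1[OF h(2) B0(1) False, of u v a "-b"] h ab aB by auto
  qed
qed

lemma pure_int: "inner P i j \<Longrightarrow> B \<in> P \<Longrightarrow> nq B = {} \<Longrightarrow> u \<in> B \<Longrightarrow> v \<in> B \<Longrightarrow> 0 < u \<Longrightarrow> u < v
   \<Longrightarrow> v < i \<or> j < u \<or> (i < u \<and> v < j)"
proof (rule ccontr)
  assume h: "inner P i j" "B \<in> P" "nq B = {}" "u \<in> B" "v \<in> B" "0 < u" "u < v"
    and nh: "\<not> (v < i \<or> j < u \<or> (i < u \<and> v < j))"
  obtain B0 where B0: "B0 \<in> P" "lower B0" "i \<in> pp B0" "j \<in> nq B0" using h(1) unfolding inner_def by blast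
  have ij: "i < j" using B0 unfolding lower_def by auto
  have iB0: "i \<in> B0" "-j \<in> B0" using B0 ppD nqD by auto
  have iB: "i \<in> B0" "-j \<in> B0" "j \<in> uminus ` B0" "-i \<in> uminus ` B0" using iB0 negI negI2 by auto
  have nB0: "uminus ` B0 \<in> P" using negc[OF B0(1)] .
  have mB0: "nq B0 \<noteq> {}" "pp B0 \<noteq> {}" using B0 by auto
  have d1: "B \<noteq> B0" using h(3) mB0 by auto
  have d2: "B \<noteq> uminus ` B0" using h(3) mB0 by auto
  have ne: "u \<noteq> i" "v \<noteq> i" using blk_eq[OF h(2) B0(1)] d1 h(4,5) iB by blast+
  have ne2: "u \<noteq> j" "v \<noteq> j" using blk_eq[OF h(2) nB0] d2 h(4,5) iB by blast+
  have vpos: "0 < v" using h by simp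
  show False
  proof (cases "u < i")
    case True
    show False
    proof (cases "v < j")
      case True
      thus False using CR1[OF h(2) B0(1) d1, of u v i "-j"] h \<open>u < i\<close> nh iB ne ij by auto
    next
      case False
      thus False using noUV[OF h(1) h(2) h(4) h(5) h(6)] \<open>u < i\<close> ne2 by auto
    qed
  next
    case False
    hence "i < u" using ne by simp
    hence "j < v" using nh ne2 by auto
    thus False using CR1[OF h(2) nB0 d2, of u v j "-i"] h \<open>i < u\<close> nh iB ij ne2 ppD[OF B0(3)] by auto
  qed
qed

end


context ncb begin

definition "eta = {B \<inter> {1..int n} | B. B \<in> P} - {{}}"
definition "Xs = {A \<in> eta. \<exists>B\<in>P. A \<subseteq> B \<and> (\<exists>k\<in>B. k < 0)}"
definition "mm = card Xs"
definition "bo A = (THE B. B \<in> P \<and> pp B = A)"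
definition "fX A = nq (bo A)"
definition "ix A = card {A'\<in>Xs. Max A' < Max A}"

lemma psi_unf: "psi n P = (((eta - {A_of Xs i | i. 1 \<le> i \<and> i \<le> mm div 2}
      - {A_of Xs (mm + 1 - i) | i. 1 \<le> i \<and> i \<le> mm div 2})
      \<union> {A_of Xs i \<union> A_of Xs (mm + 1 - i) | i. 1 \<le> i \<and> i \<le> mm div 2}),
   (if mm = 0 then XEmpty
    else if even mm then XEdge (Max (A_of Xs (mm div 2))) (Min (A_of Xs (mm div 2 + 1)))
    else XBlock (A_of Xs ((mm + 1) div 2))))"
  unfolding psi_def Let_def eta_def Xs_def mm_def by (rule refl)

lemma pp_int: "B \<in> P \<Longrightarrow> B \<inter> {1..int n} = pp B"
  using blk_el unfolding pp_def by force

lemma pp_inj: "B \<in> P \<Longrightarrow> C \<in> P \<Longrightarrow> pp B = pp C \<Longrightarrow> pp B \<noteq> {} \<Longrightarrow> B = C"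
proof -
  assume h: "B \<in> P" "C \<in> P" "pp B = pp C" "pp B \<noteq> {}"
  then obtain k where "k \<in> pp B" by auto
  hence "k \<in> B" "k \<in> C" using h(3) ppD by auto
  thus ?thesis using blk_eq[OF h(1,2)] by simp
qed

lemma eta_eq: "eta = {pp B | B. B \<in> P \<and> pp B \<noteq> {}}"
  unfolding eta_def
proof (intro set_eqI iffI)
  fix A assume "A \<in> {B \<inter> {1..int n} |B. B \<in> P} - {{}}"
  then obtain B where "B \<in> P" "A = B \<inter> {1..int n}" "A \<noteq> {}" by auto
  thus "A \<in> {pp B |B. B \<in> P \<and> pp B \<noteq> {}}" using pp_int by auto
next
  fix A assume "A \<in> {pp B |B. B \<in> P \<and> pp B \<noteq> {}}"
  then obtain B where "B \<in> P" "A = pp B" "A \<noteq> {}" by auto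
  thus "A \<in> {B \<inter> {1..int n} |B. B \<in> P} - {{}}" using pp_int[of B] by auto
qed

lemma Xs_eq: "Xs = {pp B | B. B \<in> P \<and> mixed B}"
proof
  show "Xs \<subseteq> {pp B | B. B \<in> P \<and> mixed B}"
  proof
    fix A assume "A \<in> Xs"
    then obtain B B' k where h: "B \<in> P" "A = pp B" "pp B \<noteq> {}" "B' \<in> P" "A \<subseteq> B'" "k \<in> B'" "k < 0"
      unfolding Xs_def eta_eq by blast
    obtain p where p: "p \<in> pp B" using h(3) by auto
    have "B = B'" using blk_eq[OF h(1) h(4), of p] p h(2,5) ppD by auto
    hence "-k \<in> nq B" using h nqI[of "-k" B] by simp
    hence "mixed B" using h(3) by (auto simp: mixed_def)
    thus "A \<in> {pp B | B. B \<in> P \<and> mixed B}" using h by auto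
  qed
  show "{pp B | B. B \<in> P \<and> mixed B} \<subseteq> Xs"
  proof
    fix A assume "A \<in> {pp B | B. B \<in> P \<and> mixed B}"
    then obtain B where h: "B \<in> P" "mixed B" "A = pp B" by auto
    obtain q where q: "q \<in> nq B" using h(2) by (auto simp: mixed_def)
    have "A \<in> eta" using h unfolding eta_eq mixed_def by auto
    moreover have "A \<subseteq> B" using h(3) by (auto simp: pp_def)
    moreover have "-q \<in> B" "-q < 0" using nqD[OF q] by auto
    ultimately show "A \<in> Xs" unfolding Xs_def using h(1) by blast
  qed
qed

lemma XsI: "B \<in> P \<Longrightarrow> mixed B \<Longrightarrow> pp B \<in> Xs" unfolding Xs_eq by auto
lemma XsE: "A \<in> Xs \<Longrightarrow> (\<And>B. B \<in> P \<Longrightarrow> mixed B \<Longrightarrow> A = pp B \<Longrightarrow> thesis) \<Longrightarrow> thesis"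
  unfolding Xs_eq by auto

lemma bo_pp: "B \<in> P \<Longrightarrow> pp B \<noteq> {} \<Longrightarrow> bo (pp B) = B"
  unfolding bo_def by (rule the_equality) (use pp_inj in auto)

lemma fX_pp: "B \<in> P \<Longrightarrow> mixed B \<Longrightarrow> fX (pp B) = nq B"
  unfolding fX_def using bo_pp by (simp add: mixed_def)

lemma finXs: "finite Xs"
proof -
  have "Xs \<subseteq> pp ` P" unfolding Xs_eq by auto
  thus ?thesis using finP finite_subset by blast
qed

lemma fX_in: "A \<in> Xs \<Longrightarrow> fX A \<in> Xs"
proof (erule XsE)
  fix B assume h: "B \<in> P" "mixed B" "A = pp B"
  have "fX A = pp (uminus ` B)" using fX_pp[OF h(1,2)] h(3) by simp
  thus "fX A \<in> Xs" using XsI[OF negc[OF h(1)]] h(2) by simp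
qed

lemma fX_inv: "A \<in> Xs \<Longrightarrow> fX (fX A) = A"
proof (erule XsE)
  fix B assume h: "B \<in> P" "mixed B" "A = pp B"
  have "fX A = pp (uminus ` B)" using fX_pp[OF h(1,2)] h(3) by simp
  hence "fX (fX A) = nq (uminus ` B)" using fX_pp[OF negc[OF h(1)]] h(2) by simp
  thus "fX (fX A) = A" using h(3) by simp
qed

lemma Xs_ne: "A \<in> Xs \<Longrightarrow> A \<noteq> {} \<and> finite A"
  by (erule XsE) (auto simp: mixed_def fin_pp)

lemma Max_inj: "inj_on Max Xs"
proof (rule inj_onI)
  fix A A' assume h: "A \<in> Xs" "A' \<in> Xs" "Max A = Max A'"
  obtain B where B: "B \<in> P" "mixed B" "A = pp B" using h(1) by (rule XsE) auto
  obtain B' where B': "B' \<in> P" "mixed B'" "A' = pp B'" using h(2) by (rule XsE) auto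
  have "Max A \<in> A" "Max A' \<in> A'" using Xs_ne[OF h(1)] Xs_ne[OF h(2)] Max_in by auto
  hence "Max A \<in> A" "Max A \<in> A'" using h(3) by simp_all
  hence "Max A \<in> B" "Max A \<in> B'" using B B' ppD by auto
  hence "B = B'" using blk_eq[OF B(1) B'(1)] by simp
  thus "A = A'" using B B' by simp
qed

lemma anti: "A \<in> Xs \<Longrightarrow> A' \<in> Xs \<Longrightarrow> Max A < Max A' \<Longrightarrow> Max (fX A') < Max (fX A)"
proof -
  assume h: "A \<in> Xs" "A' \<in> Xs" "Max A < Max A'"
  obtain B where B: "B \<in> P" "mixed B" "A = pp B" using h(1) by (rule XsE) auto
  obtain B' where B': "B' \<in> P" "mixed B'" "A' = pp B'" using h(2) by (rule XsE) auto
  show ?thesis using AT[OF B(1) B'(1) B(2) B'(2)] h(3) B B' fX_pp by simp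
qed

lemma ix_f: "A \<in> Xs \<Longrightarrow> ix (fX A) = mm - 1 - ix A"
  unfolding ix_def mm_def
  by (rule rank_rev[OF finXs Max_inj fX_in fX_inv anti])

lemma ix_lt: "A \<in> Xs \<Longrightarrow> ix A < mm"
proof -
  assume h: "A \<in> Xs"
  have "{A'\<in>Xs. Max A' < Max A} \<subset> Xs" using h by auto
  thus ?thesis unfolding ix_def mm_def using finXs psubset_card_mono by blast
qed

lemma ix_mono: "A \<in> Xs \<Longrightarrow> A' \<in> Xs \<Longrightarrow> Max A < Max A' \<Longrightarrow> ix A < ix A'"
proof -
  assume h: "A \<in> Xs" "A' \<in> Xs" "Max A < Max A'"
  have "{B\<in>Xs. Max B < Max A} \<subset> {B\<in>Xs. Max B < Max A'}" using h by auto
  thus ?thesis unfolding ix_def using finXs psubset_card_mono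
    by (metis (no_types, lifting) finite_subset mem_Collect_eq subsetI)
qed

lemma ix_le_iff: "A \<in> Xs \<Longrightarrow> A' \<in> Xs \<Longrightarrow> ix A \<le> ix A' \<longleftrightarrow> Max A \<le> Max A'"
proof -
  assume h: "A \<in> Xs" "A' \<in> Xs"
  show ?thesis
  proof
    assume "ix A \<le> ix A'"
    thus "Max A \<le> Max A'" using ix_mono[OF h(2) h(1)] by (meson leD linorder_le_less_linear)
  next
    assume "Max A \<le> Max A'"
    hence "Max A < Max A' \<or> Max A = Max A'" by auto
    thus "ix A \<le> ix A'"
    proof
      assume "Max A < Max A'" thus ?thesis using ix_mono[OF h] by simp
    next
      assume "Max A = Max A'" hence "A = A'" using Max_inj h by (simp add: inj_on_def)
      thus ?thesis by simp
    qed
  qed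
qed

lemma ix_inj: "inj_on ix Xs"
proof (rule inj_onI)
  fix A A' assume h: "A \<in> Xs" "A' \<in> Xs" "ix A = ix A'"
  hence "Max A \<le> Max A'" "Max A' \<le> Max A" using ix_le_iff[OF h(1,2)] ix_le_iff[OF h(2,1)] by simp_all
  hence "Max A = Max A'" by simp
  thus "A = A'" using Max_inj h by (simp add: inj_on_def)
qed

lemma ix_surj: "ix ` Xs = {..<mm}"
proof -
  have "ix ` Xs \<subseteq> {..<mm}" using ix_lt by auto
  moreover have "card (ix ` Xs) = mm" unfolding mm_def using card_image[OF ix_inj] .
  ultimately show ?thesis by (simp add: card_subset_eq)
qed

lemma A_of_ix: "A \<in> Xs \<Longrightarrow> A_of Xs (ix A + 1) = A"
proof -
  assume h: "A \<in> Xs"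
  have c: "card {t \<in> Max ` Xs. t < Max A} = ix A"
  proof -
    have "{t \<in> Max ` Xs. t < Max A} = Max ` {A'\<in>Xs. Max A' < Max A}" by auto
    moreover have "inj_on Max {A'\<in>Xs. Max A' < Max A}" using Max_inj inj_on_subset by fastforce
    ultimately show ?thesis unfolding ix_def by (simp add: card_image)
  qed
  have "sorted_list_of_set (Max ` Xs) ! ix A = Max A"
    using nth_sorted_card[of "Max ` Xs" "Max A"] c finXs h by simp
  thus ?thesis unfolding A_of_def
    by (intro the_equality) (use h Max_inj in \<open>auto simp: inj_on_def\<close>)
qed

lemma A_of_ex: "1 \<le> i \<Longrightarrow> i \<le> mm \<Longrightarrow> \<exists>A\<in>Xs. ix A = i - 1 \<and> A_of Xs i = A"
proof -
  assume h: "1 \<le> i" "i \<le> mm"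
  have "i - 1 \<in> ix ` Xs" using ix_surj h by auto
  then obtain A where A: "A \<in> Xs" "ix A = i - 1" by auto
  have "A_of Xs i = A" using A_of_ix[OF A(1)] A(2) h(1) by simp
  thus ?thesis using A by blast
qed

lemma A_of_rev: "1 \<le> i \<Longrightarrow> i \<le> mm \<Longrightarrow> A_of Xs (mm + 1 - i) = fX (A_of Xs i)"
proof -
  assume h: "1 \<le> i" "i \<le> mm"
  obtain A where A: "A \<in> Xs" "ix A = i - 1" "A_of Xs i = A" using A_of_ex[OF h] by blast
  have "ix (fX A) + 1 = mm + 1 - i" using ix_f[OF A(1)] A(2) h by simp
  thus ?thesis using A_of_ix[OF fX_in[OF A(1)]] A(3) by simp
qed

end


context ncb begin

lemma mm_decomp: obtains h where "(mm = 2*h \<and> even mm \<and> mm div 2 = h \<and> (mm+1) div 2 = h)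
   \<or> (mm = 2*h+1 \<and> odd mm \<and> mm div 2 = h \<and> (mm+1) div 2 = h+1)"
proof (cases "even mm")
  case True then obtain h where "mm = 2*h" by blast
  thus ?thesis using that True by simp
next
  case False then obtain h where "mm = 2*h+1" using oddE by blast
  thus ?thesis using that False by simp
qed

lemma R1_char: "A \<in> {A_of Xs i | i. 1 \<le> i \<and> i \<le> mm div 2} \<longleftrightarrow> A \<in> Xs \<and> ix A < mm div 2"
proof
  assume "A \<in> {A_of Xs i | i. 1 \<le> i \<and> i \<le> mm div 2}"
  then obtain i where i: "1 \<le> i" "i \<le> mm div 2" "A = A_of Xs i" by auto
  obtain A' where "A' \<in> Xs" "ix A' = i - 1" "A_of Xs i = A'" using A_of_ex[of i] i by (metis div_le_dividend order_trans)
  thus "A \<in> Xs \<and> ix A < mm div 2" using i by auto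
next
  assume h: "A \<in> Xs \<and> ix A < mm div 2"
  hence "A = A_of Xs (ix A + 1)" using A_of_ix by simp
  moreover have "1 \<le> ix A + 1" "ix A + 1 \<le> mm div 2" using h by auto
  ultimately show "A \<in> {A_of Xs i | i. 1 \<le> i \<and> i \<le> mm div 2}" by blast
qed

lemma R2_char: "A \<in> {A_of Xs (mm + 1 - i) | i. 1 \<le> i \<and> i \<le> mm div 2} \<longleftrightarrow> A \<in> Xs \<and> mm - mm div 2 \<le> ix A"
proof
  assume "A \<in> {A_of Xs (mm + 1 - i) | i. 1 \<le> i \<and> i \<le> mm div 2}"
  then obtain i where i: "1 \<le> i" "i \<le> mm div 2" "A = A_of Xs (mm + 1 - i)" by auto
  obtain A' where A': "A' \<in> Xs" "ix A' = i - 1" "A_of Xs i = A'" using A_of_ex[of i] i by (metis div_le_dividend order_trans)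
  have "A = fX A'" using A_of_rev[of i] i A' by simp
  moreover have "ix (fX A') = mm - i" using ix_f[OF A'(1)] A'(2) i by simp
  ultimately show "A \<in> Xs \<and> mm - mm div 2 \<le> ix A" using fX_in[OF A'(1)] i by auto
next
  assume h: "A \<in> Xs \<and> mm - mm div 2 \<le> ix A"
  have lt: "ix A < mm" using ix_lt h by simp
  define i where "i = mm - ix A"
  have "mm + 1 - i = ix A + 1" using lt unfolding i_def by simp
  hence "A = A_of Xs (mm + 1 - i)" using A_of_ix h by simp
  moreover have "1 \<le> i" "i \<le> mm div 2" using h lt unfolding i_def by auto
  ultimately show "A \<in> {A_of Xs (mm + 1 - i) | i. 1 \<le> i \<and> i \<le> mm div 2}" by blast
qed

lemma M_char: "D \<in> {A_of Xs i \<union> A_of Xs (mm + 1 - i) | i. 1 \<le> i \<and> i \<le> mm div 2}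
   \<longleftrightarrow> (\<exists>A\<in>Xs. ix A < mm div 2 \<and> D = A \<union> fX A)"
proof
  assume "D \<in> {A_of Xs i \<union> A_of Xs (mm + 1 - i) | i. 1 \<le> i \<and> i \<le> mm div 2}"
  then obtain i where i: "1 \<le> i" "i \<le> mm div 2" "D = A_of Xs i \<union> A_of Xs (mm + 1 - i)" by auto
  obtain A' where A': "A' \<in> Xs" "ix A' = i - 1" "A_of Xs i = A'" using A_of_ex[of i] i by (metis div_le_dividend order_trans)
  have "D = A' \<union> fX A'" using A_of_rev[of i] i A' by simp
  moreover have "ix A' < mm div 2" using A' i by simp
  ultimately show "\<exists>A\<in>Xs. ix A < mm div 2 \<and> D = A \<union> fX A" using A'(1) by blast
next
  assume "\<exists>A\<in>Xs. ix A < mm div 2 \<and> D = A \<union> fX A"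
  then obtain A where A: "A \<in> Xs" "ix A < mm div 2" "D = A \<union> fX A" by auto
  have lt: "ix A < mm" using ix_lt A by simp
  have "A_of Xs (ix A + 1) = A" using A_of_ix A by simp
  moreover have "A_of Xs (mm + 1 - (ix A + 1)) = fX A" using A_of_rev[of "ix A + 1"] lt calculation by simp
  moreover have "1 \<le> ix A + 1" "ix A + 1 \<le> mm div 2" using A by auto
  ultimately show "D \<in> {A_of Xs i \<union> A_of Xs (mm + 1 - i) | i. 1 \<le> i \<and> i \<le> mm div 2}"
    using A(3) by (metis (mono_tags, lifting) mem_Collect_eq)
qed

lemma mid: "A \<in> Xs \<Longrightarrow> \<not> ix A < mm div 2 \<Longrightarrow> \<not> mm - mm div 2 \<le> ix A \<Longrightarrow> fX A = A \<and> odd mm"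
proof -
  assume h: "A \<in> Xs" "\<not> ix A < mm div 2" "\<not> mm - mm div 2 \<le> ix A"
  have o: "odd mm" "ix A = mm div 2" using h(2,3) by - (rule mm_decomp, elim disjE conjE, (simp; arith)+)+
  have "ix (fX A) = ix A" using ix_f[OF h(1)] o by - (rule mm_decomp, elim disjE conjE, (simp; arith)+)
  hence "fX A = A" using ix_inj fX_in[OF h(1)] h(1) by (simp add: inj_on_def)
  thus ?thesis using o by simp
qed

lemma sigma_eq: "fst (psi n P) = (\<lambda>B. abs ` B) ` P"
proof -
  let ?R1 = "{A_of Xs i | i. 1 \<le> i \<and> i \<le> mm div 2}"
  let ?R2 = "{A_of Xs (mm + 1 - i) | i. 1 \<le> i \<and> i \<le> mm div 2}"
  let ?M = "{A_of Xs i \<union> A_of Xs (mm + 1 - i) | i. 1 \<le> i \<and> i \<le> mm div 2}"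
  have f: "fst (psi n P) = (eta - ?R1 - ?R2) \<union> ?M" by (subst psi_unf, rule fst_conv)
  have pureC: "\<And>C. C \<in> P \<Longrightarrow> nq C = {} \<Longrightarrow> abs ` C \<in> (eta - ?R1 - ?R2)"
  proof -
    fix C assume C: "C \<in> P" "nq C = {}"
    have ne: "pp C \<noteq> {}" using blk_ne[OF C(1)] absB[OF C(1)] C(2) by auto
    have "pp C \<notin> Xs"
    proof
      assume "pp C \<in> Xs"
      then obtain B where B: "B \<in> P" "mixed B" "pp C = pp B" by (rule XsE) auto
      hence "C = B" using pp_inj[OF C(1) B(1)] ne by simp
      thus False using B C by (simp add: mixed_def)
    qed
    moreover have "pp C \<in> eta" using C(1) ne unfolding eta_eq by auto
    ultimately show "abs ` C \<in> (eta - ?R1 - ?R2)" using absB[OF C(1)] C(2) R1_char R2_char by auto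
  qed
  show ?thesis unfolding f
  proof (intro set_eqI iffI)
    fix D assume "D \<in> (eta - ?R1 - ?R2) \<union> ?M"
    thus "D \<in> (\<lambda>B. abs ` B) ` P"
    proof
      assume D: "D \<in> eta - ?R1 - ?R2"
      then obtain B where B: "B \<in> P" "D = pp B" "pp B \<noteq> {}" unfolding eta_eq by auto
      show ?thesis
      proof (cases "nq B = {}")
        case True thus ?thesis using B absB[OF B(1)] by (intro image_eqI[of _ _ B]) auto
      next
        case False
        hence mB: "mixed B" using B by (simp add: mixed_def)
        have DX: "D \<in> Xs" using XsI[OF B(1) mB] B by simp
        have D1: "D \<in> eta - ?R1" using DiffD1[OF D] .
        have n1: "D \<notin> ?R1" "D \<notin> ?R2"
        proof -
          show "D \<notin> ?R1"
          proof
            assume "D \<in> ?R1" thus False using D1 by (rule DiffD2[rotated])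
          qed
          show "D \<notin> ?R2"
          proof
            assume "D \<in> ?R2" thus False using D by (rule DiffD2[rotated])
          qed
        qed
        have "\<not> ix D < mm div 2" using R1_char[of D] DX n1(1) by simp
        moreover have "\<not> mm - mm div 2 \<le> ix D" using R2_char[of D] DX n1(2) by simp
        ultimately
        have "fX D = D" using mid[OF DX] by simp
        hence "nq B = pp B" using fX_pp[OF B(1) mB] B by simp
        thus ?thesis using B absB[OF B(1)] by (intro image_eqI[of _ _ B]) auto
      qed
    next
      assume "D \<in> ?M"
      then obtain A where A: "A \<in> Xs" "D = A \<union> fX A" using M_char by auto
      obtain B where B: "B \<in> P" "mixed B" "A = pp B" using A(1) by (rule XsE) auto
      have "D = abs ` B" using A B fX_pp[OF B(1,2)] absB[OF B(1)] by simp
      thus ?thesis using B by auto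
    qed
  next
    fix D assume "D \<in> (\<lambda>B. abs ` B) ` P"
    then obtain B where B: "B \<in> P" "D = abs ` B" by auto
    show "D \<in> (eta - ?R1 - ?R2) \<union> ?M"
    proof (cases "mixed B")
      case False
      show ?thesis
      proof (cases "nq B = {}")
        case True thus ?thesis using pureC[OF B(1)] B by simp
      next
        case False
        hence "pp B = {}" using \<open>\<not> mixed B\<close> by (simp add: mixed_def)
        hence "nq (uminus ` B) = {}" by simp
        thus ?thesis using pureC[OF negc[OF B(1)]] B by simp
      qed
    next
      case True
      have A: "pp B \<in> Xs" using XsI[OF B(1) True] .
      have fA: "fX (pp B) = nq B" using fX_pp[OF B(1) True] .
      show ?thesis
      proof (cases "ix (pp B) < mm div 2")
        case True
        hence "D \<in> ?M" using M_char A fA B absB[OF B(1)] by auto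
        thus ?thesis by simp
      next
        case c2: False
        show ?thesis
        proof (cases "mm - mm div 2 \<le> ix (pp B)")
          case True
          have lt: "ix (pp B) < mm" using ix_lt A by simp
          have e: "ix (nq B) = mm - 1 - ix (pp B)" using ix_f[OF A] fA by simp
          have i1: "ix (nq B) < mm div 2" using e True lt by - (rule mm_decomp, elim disjE conjE, (simp; arith)+)
          have i2: "nq B \<in> Xs" using fX_in[OF A] fA by simp
          have i3: "fX (nq B) = pp B" using fX_inv[OF A] fA by simp
          have "D = nq B \<union> fX (nq B)" using i3 B absB[OF B(1)] by auto
          hence "\<exists>A\<in>Xs. ix A < mm div 2 \<and> D = A \<union> fX A" using i1 i2 by blast
          hence "D \<in> ?M" using M_char[of D] by (rule iffD2[rotated])
          thus ?thesis by simp
        next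
          case False
          have "fX (pp B) = pp B" using mid[OF A c2 False] by simp
          hence "D = pp B" using fA B absB[OF B(1)] by simp
          moreover have "pp B \<in> eta" using A unfolding Xs_def by simp
          ultimately have "D \<in> eta - ?R1 - ?R2" using R1_char R2_char c2 False by auto
          thus ?thesis by simp
        qed
      qed
    qed
  qed
qed

lemma psi_snd: "snd (psi n P) = (if mm = 0 then XEmpty
    else if even mm then XEdge (Max (A_of Xs (mm div 2))) (Min (A_of Xs (mm div 2 + 1)))
    else XBlock (A_of Xs ((mm + 1) div 2)))"
  by (subst psi_unf, rule snd_conv)

lemma x_empty: "snd (psi n P) = XEmpty \<Longrightarrow> B \<in> P \<Longrightarrow> \<not> mixed B"
proof -
  assume h: "snd (psi n P) = XEmpty" "B \<in> P"
  have "mm = 0" using h(1) unfolding psi_snd by (auto split: if_splits)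
  hence "Xs = {}" using finXs unfolding mm_def by simp
  thus "\<not> mixed B" using XsI[OF h(2)] by auto
qed

lemma x_block: "snd (psi n P) = XBlock C \<Longrightarrow> \<exists>Z\<in>P. uminus ` Z = Z \<and> C = pp Z"
proof -
  assume h: "snd (psi n P) = XBlock C"
  have m: "mm \<noteq> 0" "odd mm" "C = A_of Xs ((mm + 1) div 2)" using h unfolding psi_snd by (auto split: if_splits)
  have m1: "1 \<le> (mm + 1) div 2" "(mm + 1) div 2 \<le> mm" using m by - (rule mm_decomp, elim disjE conjE, (simp; arith)+)+
  obtain A where A: "A \<in> Xs" "ix A = (mm + 1) div 2 - 1" "A_of Xs ((mm + 1) div 2) = A"
    using A_of_ex[OF m1] by blast
  have "ix (fX A) = ix A" using ix_f[OF A(1)] A(2) m by - (rule mm_decomp, elim disjE conjE, (simp; arith)+)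
  hence fA: "fX A = A" using ix_inj fX_in[OF A(1)] A(1) by (simp add: inj_on_def)
  obtain B where B: "B \<in> P" "mixed B" "A = pp B" using A(1) by (rule XsE) auto
  have "nq B = pp B" using fX_pp[OF B(1,2)] fA B by simp
  hence "uminus ` B = B" using zero_of_eq[OF B(1)] by simp
  thus ?thesis using B A m by auto
qed

lemma x_edge: "snd (psi n P) = XEdge a b \<Longrightarrow> inner P a b"
proof -
  assume h: "snd (psi n P) = XEdge a b"
  have m: "mm \<noteq> 0" "even mm" "a = Max (A_of Xs (mm div 2))" "b = Min (A_of Xs (mm div 2 + 1))"
    using h unfolding psi_snd by (auto split: if_splits)
  have m1: "1 \<le> mm div 2" "mm div 2 \<le> mm" using m by - (rule mm_decomp, elim disjE conjE, (simp; arith)+)+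
  obtain A where A: "A \<in> Xs" "ix A = mm div 2 - 1" "A_of Xs (mm div 2) = A"
    using A_of_ex[OF m1] by blast
  have e: "mm + 1 - mm div 2 = mm div 2 + 1" using m by - (rule mm_decomp, elim disjE conjE, (simp; arith)+)
  have "A_of Xs (mm div 2 + 1) = fX A" using A_of_rev[OF m1] A(3) unfolding e by simp
  hence b: "b = Min (fX A)" using m by simp
  obtain B0 where B0: "B0 \<in> P" "mixed B0" "A = pp B0" using A(1) by (rule XsE) auto
  have fA: "fX A = nq B0" using fX_pp[OF B0(1,2)] B0 by simp
  have ixf: "ix (fX A) = mm div 2" using ix_f[OF A(1)] A(2) m by - (rule mm_decomp, elim disjE conjE, (simp; arith)+)
  have nz: "\<forall>Z\<in>P. uminus ` Z \<noteq> Z"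
  proof (intro ballI notI)
    fix Z assume Z: "Z \<in> P" "uminus ` Z = Z"
    have ppnq: "pp Z = nq Z" using eq_of_zero[OF Z(2)] .
    have ne: "pp Z \<noteq> {}" using blk_ne[OF Z(1)] absB[OF Z(1)] ppnq by auto
    hence mZ: "mixed Z" using ppnq by (simp add: mixed_def)
    have "fX (pp Z) = pp Z" using fX_pp[OF Z(1) mZ] ppnq by simp
    hence "ix (pp Z) = mm - 1 - ix (pp Z)" using ix_f[OF XsI[OF Z(1) mZ]] by simp
    moreover have "ix (pp Z) < mm" using ix_lt[OF XsI[OF Z(1) mZ]] .
    ultimately show False using m by - (rule mm_decomp, elim disjE conjE, (simp; arith)+)
  qed
  have nzB0: "uminus ` B0 \<noteq> B0" using nz B0 by auto
  have neB0: "pp B0 \<noteq> {}" "nq B0 \<noteq> {}" using B0 by (auto simp: mixed_def)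
  have MaxB0: "Max (pp B0) < Max (nq B0)"
  proof -
    have "ix A < ix (fX A)" using ixf A(2) m1 by simp
    hence "\<not> ix (fX A) \<le> ix A" by simp
    hence "\<not> Max (fX A) \<le> Max A" using ix_le_iff[OF fX_in[OF A(1)] A(1)] by simp
    thus ?thesis using fA B0 by simp
  qed
  have lB0: "lower B0"
  proof -
    have "lower B0 \<or> lower (uminus ` B0)" using sep[OF B0(1,2) nzB0] .
    moreover have "\<not> lower (uminus ` B0)"
    proof
      assume "lower (uminus ` B0)"
      hence "Max (nq B0) < Max (pp B0)" unfolding lower_def using neB0 fin_pp[OF B0(1)] fin_nq[OF B0(1)] by simp
      thus False using MaxB0 by simp
    qed
    ultimately show ?thesis by simp
  qed
  have aB0: "a \<in> pp B0" using m A B0 neB0 fin_pp[OF B0(1)] by simp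
  have bB0: "b \<in> nq B0" using b fA neB0 fin_nq[OF B0(1)] by simp
  have inn: "\<forall>B\<in>P. lower B \<longrightarrow> (\<forall>p\<in>pp B. p \<le> a) \<and> (\<forall>q\<in>nq B. b \<le> q)"
  proof (rule ballI, rule impI, rule conjI)
    fix B assume B: "B \<in> P" "lower B"
    have mB: "mixed B" using B unfolding lower_def by simp
    have ne: "pp B \<noteq> {}" "nq B \<noteq> {}" using mB by (auto simp: mixed_def)
    have XB: "pp B \<in> Xs" "nq B \<in> Xs" using XsI[OF B(1) mB] fX_in[OF XsI[OF B(1) mB]] fX_pp[OF B(1) mB] by auto
    have MLt: "Max (pp B) < Max (nq B)" using B(2) ne fin_pp[OF B(1)] fin_nq[OF B(1)] unfolding lower_def by simp
    have ixB: "ix (nq B) = mm - 1 - ix (pp B)" using ix_f[OF XB(1)] fX_pp[OF B(1) mB] by simp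
    have "ix (pp B) < ix (nq B)" using ix_mono[OF XB MLt] .
    hence lt: "ix (pp B) \<le> mm div 2 - 1" using ixB m by - (rule mm_decomp, elim disjE conjE, (simp; arith)+)
    hence "Max (pp B) \<le> Max A" using ix_le_iff[OF XB(1) A(1)] A(2) by simp
    thus "\<forall>p\<in>pp B. p \<le> a" using m A fin_pp[OF B(1)] by (metis Max_ge order_trans)
    have "ix (fX A) \<le> ix (nq B)" using ixB ixf lt m by - (rule mm_decomp, elim disjE conjE, (simp; arith)+)
    hence MM: "Max (nq B0) \<le> Max (nq B)" using ix_le_iff[OF fX_in[OF A(1)] XB(2)] fA by simp
    show "\<forall>q\<in>nq B. b \<le> q"
    proof
      fix q assume q: "q \<in> nq B"
      show "b \<le> q"
      proof (cases "B = B0")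
        case True thus ?thesis using q b fA fin_nq[OF B0(1)] by simp
      next
        case False
        show ?thesis
        proof (rule ccontr)
          assume "\<not> b \<le> q"
          hence qb: "q < b" by simp
          define v where "v = Max (nq B)"
          have v: "v \<in> nq B" unfolding v_def using ne fin_nq[OF B(1)] by simp
          have bv: "b \<le> v" using MM bB0 fin_nq[OF B0(1)] v_def by (meson Max_ge order_trans)
          have "b \<noteq> v"
          proof
            assume "b = v"
            hence "-b \<in> B" "-b \<in> B0" using v bB0 nqD by auto
            thus False using blk_eq[OF B(1) B0(1)] False by simp
          qed
          hence bv2: "b < v" using bv by simp
          have "B0 \<noteq> B" using False by simp
          thus False using CR2[OF B0(1) B(1) \<open>B0 \<noteq> B\<close>, of a "-b" "-q" "-v"] aB0 bB0 q v qb bv2 ppD nqD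
            by auto
        qed
      qed
    qed
  qed
  show "inner P a b" unfolding inner_def using B0 lB0 aB0 bB0 inn nz by blast
qed

end


lemma straddle:
  fixes S :: "int set"
  assumes "finite S" "u \<in> S" "v \<in> S" "u \<le> L" "R \<le> v" "L < R" "\<forall>k\<in>S. k \<le> L \<or> R \<le> k"
  shows "\<exists>i j. i \<in> S \<and> j \<in> S \<and> i \<le> L \<and> R \<le> j \<and> (\<forall>k\<in>S. \<not> (i < k \<and> k < j))"
proof -
  define i where "i = Max {k\<in>S. k \<le> L}"
  define j where "j = Min {k\<in>S. R \<le> k}"
  have f1: "finite {k\<in>S. k \<le> L}" "finite {k\<in>S. R \<le> k}" using assms(1) by auto
  have n1: "{k\<in>S. k \<le> L} \<noteq> {}" "{k\<in>S. R \<le> k} \<noteq> {}" using assms by auto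
  have i: "i \<in> S" "i \<le> L" using Max_in[OF f1(1) n1(1)] unfolding i_def by auto
  have j: "j \<in> S" "R \<le> j" using Min_in[OF f1(2) n1(2)] unfolding j_def by auto
  have "\<forall>k\<in>S. \<not> (i < k \<and> k < j)"
  proof (intro ballI notI)
    fix k assume k: "k \<in> S" "i < k \<and> k < j"
    show False
    proof (cases "k \<le> L")
      case True hence "k \<le> i" unfolding i_def using f1(1) k(1) by (simp add: Max_ge)
      thus False using k by simp
    next
      case False hence "R \<le> k" using assms(7) k(1) by auto
      hence "j \<le> k" unfolding j_def using f1(2) k(1) by (simp add: Min_le)
      thus False using k by simp
    qed
  qed
  thus ?thesis using i j by blast
qed

context ncb begin

lemma normal: "B \<in> P \<Longrightarrow> nq B = {} \<or> pp B = {} \<or> lower B \<or> lower (uminus ` B) \<or> uminus ` B = B"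
  using sep[of B] unfolding mixed_def by blast

lemma decomp: "B \<in> P \<Longrightarrow> B = pp B \<union> uminus ` nq B"
proof
  assume B: "B \<in> P"
  show "B \<subseteq> pp B \<union> uminus ` nq B"
  proof
    fix k assume k: "k \<in> B"
    have "k \<noteq> 0" using blk_el[OF B k] by simp
    show "k \<in> pp B \<union> uminus ` nq B"
    proof (cases "k > 0")
      case True thus ?thesis using k ppI by auto
    next
      case False hence "-k > 0" using \<open>k \<noteq> 0\<close> by simp
      hence "-k \<in> nq B" using k nqI[of "-k" B] by simp
      hence "-(-k) \<in> uminus ` nq B" by (rule imageI)
      thus ?thesis by simp
    qed
  qed
  show "pp B \<union> uminus ` nq B \<subseteq> B" using ppD nqD by auto
qed

lemma sub_of: "B \<in> P \<Longrightarrow> pp B \<subseteq> pp C \<Longrightarrow> nq B \<subseteq> nq C \<Longrightarrow> B \<subseteq> C"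
proof -
  assume h: "B \<in> P" "pp B \<subseteq> pp C" "nq B \<subseteq> nq C"
  have "pp B \<union> uminus ` nq B \<subseteq> C" using h(2,3) ppD nqD by fastforce
  thus ?thesis using decomp[OF h(1)] by simp
qed

lemma abs_pos: "B \<in> P \<Longrightarrow> k \<in> abs ` B \<Longrightarrow> 0 < k"
  using blk_el by force

lemma pure_abs: "B \<in> P \<Longrightarrow> nq B = {} \<Longrightarrow> abs ` B = B"
proof -
  assume h: "B \<in> P" "nq B = {}"
  have "B = pp B" using decomp[OF h(1)] h(2) by simp
  moreover have "abs ` B = pp B" using absB[OF h(1)] h(2) by simp
  ultimately show ?thesis by simp
qed

lemma zero_abs: "Z \<in> P \<Longrightarrow> uminus ` Z = Z \<Longrightarrow> abs ` Z = pp Z"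
  using absB eq_of_zero by simp

lemma lower_abs: "B \<in> P \<Longrightarrow> lower (uminus ` B) \<Longrightarrow> abs ` B = pp (uminus ` B) \<union> nq (uminus ` B)"
  using absB by auto

lemma inner_bounds: "inner P a b \<Longrightarrow> B \<in> P \<Longrightarrow> lower B \<Longrightarrow> (\<forall>p\<in>pp B. p \<le> a) \<and> (\<forall>q\<in>nq B. b \<le> q)"
  unfolding inner_def by blast

lemma inner_nz: "inner P a b \<Longrightarrow> B \<in> P \<Longrightarrow> uminus ` B \<noteq> B"
  unfolding inner_def by blast

lemma inner_lt: "inner P a b \<Longrightarrow> a < b"
  unfolding inner_def lower_def by blast

lemma inner_edge: "inner P a b \<Longrightarrow> is_edge ((\<lambda>B. abs ` B) ` P) a b"
proof -
  assume h: "inner P a b"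
  obtain B0 where B0: "B0 \<in> P" "lower B0" "a \<in> pp B0" "b \<in> nq B0" using h unfolding inner_def by blast
  have bd: "\<forall>p\<in>pp B0. p \<le> a" "\<forall>q\<in>nq B0. b \<le> q" using inner_bounds[OF h B0(1,2)] by auto
  have "a \<in> abs ` B0" "b \<in> abs ` B0" using absB[OF B0(1)] B0 by auto
  moreover have "\<forall>k\<in>abs ` B0. \<not> (a < k \<and> k < b)"
  proof
    fix k assume "k \<in> abs ` B0"
    hence "k \<in> pp B0 \<or> k \<in> nq B0" using absB[OF B0(1)] by simp
    thus "\<not> (a < k \<and> k < b)" using bd by auto
  qed
  moreover have "a < b" using inner_lt[OF h] .
  ultimately show ?thesis unfolding is_edge_def using B0(1) by blast
qed

lemma zero_hit: "Z \<in> P \<Longrightarrow> uminus ` Z = Z \<Longrightarrow> C \<in> P \<Longrightarrow> k \<in> pp Z \<Longrightarrow> k \<in> abs ` C \<Longrightarrow> C = Z"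
proof -
  assume h: "Z \<in> P" "uminus ` Z = Z" "C \<in> P" "k \<in> pp Z" "k \<in> abs ` C"
  have kz: "k \<in> Z" "-k \<in> Z" using h(4) eq_of_zero[OF h(2)] ppD nqD by auto
  have "k \<in> pp C \<or> k \<in> nq C" using absB[OF h(3)] h(5) by auto
  hence "k \<in> C \<or> -k \<in> C" using ppD nqD by auto
  thus ?thesis using blk_eq[OF h(3) h(1)] kz by blast
qed

lemma zero_mixed_lower: "Z \<in> P \<Longrightarrow> uminus ` Z = Z \<Longrightarrow> B \<in> P \<Longrightarrow> B \<noteq> Z \<Longrightarrow> mixed B \<Longrightarrow> lower B \<or> lower (uminus ` B)"
proof -
  assume h: "Z \<in> P" "uminus ` Z = Z" "B \<in> P" "B \<noteq> Z" "mixed B"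
  have "uminus ` B \<noteq> B" using zuniq[OF h(3) h(1)] h(2,4) by blast
  thus ?thesis using sep[OF h(3) h(5)] by simp
qed

end

locale two = p1: ncb n P1 + p2: ncb n P2 for n P1 P2
begin

abbreviation "S1 \<equiv> (\<lambda>B. abs ` B) ` P1"
abbreviation "S2 \<equiv> (\<lambda>B. abs ` B) ` P2"

lemma ref_sig: "refines P1 P2 \<Longrightarrow> refines S1 S2"
  unfolding refines_def
proof (rule ballI)
  fix D assume h: "\<forall>B\<in>P1. \<exists>C\<in>P2. B \<subseteq> C" "D \<in> S1"
  then obtain B where B: "B \<in> P1" "D = abs ` B" by blast
  then obtain C where C: "C \<in> P2" "B \<subseteq> C" using h(1) by blast
  have "abs ` C \<in> S2" using C(1) by (rule imageI)
  moreover have "D \<subseteq> abs ` C" using B(2) C(2) by (simp add: image_mono)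
  ultimately show "\<exists>C\<in>S2. D \<subseteq> C" by blast
qed

lemma sig_ref: "refines S1 S2 \<Longrightarrow> B \<in> P1 \<Longrightarrow> \<exists>C\<in>P2. abs ` B \<subseteq> abs ` C"
  unfolding refines_def by blast

lemma edge1: "is_edge S1 i j \<Longrightarrow> \<exists>B\<in>P1. i < j \<and> i \<in> abs ` B \<and> j \<in> abs ` B \<and> (\<forall>k\<in>abs ` B. \<not> (i < k \<and> k < j))"
  unfolding is_edge_def by blast

lemma sub_pm: "B \<in> P1 \<Longrightarrow> C \<in> P2 \<Longrightarrow> abs ` B \<subseteq> abs ` C \<Longrightarrow> k \<in> B \<Longrightarrow> k \<in> C \<or> -k \<in> C"
proof -
  assume h: "B \<in> P1" "C \<in> P2" "abs ` B \<subseteq> abs ` C" "k \<in> B"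
  have "\<bar>k\<bar> \<in> abs ` C" using h by auto
  then obtain c where c: "c \<in> C" "\<bar>k\<bar> = \<bar>c\<bar>" by auto
  hence "k = c \<or> k = -c" by arith
  thus ?thesis using c by auto
qed

end


context ncb begin
lemma zero_mixed: "B \<in> P \<Longrightarrow> uminus ` B = B \<Longrightarrow> mixed B"
proof -
  assume h: "B \<in> P" "uminus ` B = B"
  have "pp B = nq B" using eq_of_zero[OF h(2)] .
  moreover have "abs ` B \<noteq> {}" using blk_ne[OF h(1)] by simp
  ultimately show ?thesis using absB[OF h(1)] unfolding mixed_def by simp
qed

lemma lower_mixed: "lower B \<Longrightarrow> mixed B" unfolding lower_def by simp

lemma pp_sub: "pp B \<subseteq> B" unfolding pp_def by auto
lemma nq_sub: "nq B \<subseteq> uminus ` B" unfolding nq_def by force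
end

context two begin

lemma norm1: "B \<in> P1 \<Longrightarrow> \<exists>B'. (B' = B \<or> B' = uminus ` B) \<and> (nq B' = {} \<or> lower B' \<or> uminus ` B' = B')"
proof -
  assume B: "B \<in> P1"
  have "nq B = {} \<or> pp B = {} \<or> lower B \<or> lower (uminus ` B) \<or> uminus ` B = B" using p1.normal[OF B] .
  moreover have "pp B = {} \<Longrightarrow> nq (uminus ` B) = {}" by simp
  ultimately show ?thesis by blast
qed

lemma norm2: "C \<in> P2 \<Longrightarrow> \<exists>C'. (C' = C \<or> C' = uminus ` C) \<and> (nq C' = {} \<or> lower C' \<or> uminus ` C' = C')"
proof -
  assume B: "C \<in> P2"
  have "nq C = {} \<or> pp C = {} \<or> lower C \<or> lower (uminus ` C) \<or> uminus ` C = C" using p2.normal[OF B] .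
  moreover have "pp C = {} \<Longrightarrow> nq (uminus ` C) = {}" by simp
  ultimately show ?thesis by blast
qed

lemma good_wlog:
  assumes H: "\<And>B C. B \<in> P1 \<Longrightarrow> C \<in> P2 \<Longrightarrow> abs ` B \<subseteq> abs ` C \<Longrightarrow> nq B = {} \<or> lower B \<or> uminus ` B = B
       \<Longrightarrow> nq C = {} \<or> lower C \<or> uminus ` C = C \<Longrightarrow> B \<subseteq> C \<or> B \<subseteq> uminus ` C"
    and B: "B \<in> P1" and C: "C \<in> P2" and sub: "abs ` B \<subseteq> abs ` C"
  shows "B \<subseteq> C \<or> B \<subseteq> uminus ` C"
proof -
  obtain B' where B': "B' = B \<or> B' = uminus ` B" "nq B' = {} \<or> lower B' \<or> uminus ` B' = B'" using norm1[OF B] by blast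
  obtain C' where C': "C' = C \<or> C' = uminus ` C" "nq C' = {} \<or> lower C' \<or> uminus ` C' = C'" using norm2[OF C] by blast
  have B'P: "B' \<in> P1" using B'(1) B p1.negc by auto
  have C'P: "C' \<in> P2" using C'(1) C p2.negc by auto
  have "abs ` B' \<subseteq> abs ` C'" using B'(1) C'(1) sub by auto
  hence r: "B' \<subseteq> C' \<or> B' \<subseteq> uminus ` C'" using H[OF B'P C'P _ B'(2) C'(2)] by simp
  have mono: "\<And>X Y. (X::int set) \<subseteq> Y \<Longrightarrow> uminus ` X \<subseteq> uminus ` Y" by (rule image_mono)
  show ?thesis
  proof (cases "B' = B")
    case True
    thus ?thesis using r C'(1) by auto
  next
    case False
    hence bb: "B = uminus ` B'" using B'(1) by auto
    show ?thesis
    proof (cases "C' = C")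
      case True
      thus ?thesis using r bb mono[of B' C'] mono[of B' "uminus ` C'"] by auto
    next
      case False
      hence cc: "C = uminus ` C'" using C'(1) by auto
      thus ?thesis using r bb mono[of B' C'] mono[of B' "uminus ` C'"] by auto
    qed
  qed
qed

lemma good_ref:
  assumes ref: "refines S1 S2"
    and H: "\<And>B C. B \<in> P1 \<Longrightarrow> C \<in> P2 \<Longrightarrow> abs ` B \<subseteq> abs ` C \<Longrightarrow> nq B = {} \<or> lower B \<or> uminus ` B = B
       \<Longrightarrow> nq C = {} \<or> lower C \<or> uminus ` C = C \<Longrightarrow> B \<subseteq> C \<or> B \<subseteq> uminus ` C"
  shows "refines P1 P2"
  unfolding refines_def
proof
  fix B assume B: "B \<in> P1"
  obtain C where C: "C \<in> P2" "abs ` B \<subseteq> abs ` C" using sig_ref[OF ref B] by blast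
  have "B \<subseteq> C \<or> B \<subseteq> uminus ` C" using good_wlog[OF H B C] by blast
  moreover have "uminus ` C \<in> P2" using p2.negc[OF C(1)] .
  ultimately show "\<exists>C\<in>P2. B \<subseteq> C" using C(1) by blast
qed

lemma pure_pure: "B \<in> P1 \<Longrightarrow> C \<in> P2 \<Longrightarrow> abs ` B \<subseteq> abs ` C \<Longrightarrow> nq B = {} \<Longrightarrow> nq C = {} \<Longrightarrow> B \<subseteq> C"
  using p1.pure_abs p2.pure_abs by metis

lemma pure_lower_split: "B \<in> P1 \<Longrightarrow> C \<in> P2 \<Longrightarrow> abs ` B \<subseteq> abs ` C \<Longrightarrow> nq B = {}
   \<Longrightarrow> (B \<subseteq> pp C \<or> B \<subseteq> nq C) \<Longrightarrow> B \<subseteq> C \<or> B \<subseteq> uminus ` C"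
  using p2.pp_sub p2.nq_sub by blast

lemma pure_in_abs: "B \<in> P1 \<Longrightarrow> C \<in> P2 \<Longrightarrow> abs ` B \<subseteq> abs ` C \<Longrightarrow> nq B = {} \<Longrightarrow> B \<subseteq> pp C \<union> nq C"
  using p1.pure_abs p2.absB by metis

end


context two begin

lemma dir2_empty:
  assumes ref: "refines S1 S2" and m1: "\<forall>B\<in>P1. \<not> mixed B" and m2: "\<forall>C\<in>P2. \<not> mixed C"
  shows "refines P1 P2"
proof (rule good_ref[OF ref])
  fix B C assume h: "B \<in> P1" "C \<in> P2" "abs ` B \<subseteq> abs ` C" "nq B = {} \<or> lower B \<or> uminus ` B = B"
    "nq C = {} \<or> lower C \<or> uminus ` C = C"
  have "nq B = {}" using h(4) m1 h(1) p1.lower_mixed p1.zero_mixed[OF h(1)] by blast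
  moreover have "nq C = {}" using h(5) m2 h(2) p2.lower_mixed p2.zero_mixed[OF h(2)] by blast
  ultimately show "B \<subseteq> C \<or> B \<subseteq> uminus ` C" using pure_pure[OF h(1-3)] by simp
qed

lemma dir2_edge:
  assumes ref: "refines S1 S2" and inn2: "inner P2 a b"
    and X1: "(\<exists>i j. inner P1 i j \<and> i \<le> a \<and> b \<le> j \<and>
              (\<forall>i' j'. is_edge S1 i' j' \<and> i' \<le> a \<and> a < b \<and> b \<le> j' \<and> (i', j') \<noteq> (i, j)
                  \<longrightarrow> j - i < j' - i'))
          \<or> ((\<forall>B\<in>P1. \<not> mixed B) \<and> \<not> (\<exists>i j. is_edge S1 i j \<and> i \<le> a \<and> a < b \<and> b \<le> j))"
  shows "refines P1 P2"
proof (rule good_ref[OF ref])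
  fix B C assume h: "B \<in> P1" "C \<in> P2" "abs ` B \<subseteq> abs ` C" "nq B = {} \<or> lower B \<or> uminus ` B = B"
    "nq C = {} \<or> lower C \<or> uminus ` C = C"
  have ab: "a < b" using p2.inner_lt[OF inn2] .
  have Cnz: "uminus ` C \<noteq> C" using p2.inner_nz[OF inn2 h(2)] .
  have mixX: "mixed B \<Longrightarrow> \<exists>i j. inner P1 i j \<and> i \<le> a \<and> b \<le> j \<and>
              (\<forall>i' j'. is_edge S1 i' j' \<and> i' \<le> a \<and> a < b \<and> b \<le> j' \<and> (i', j') \<noteq> (i, j)
                  \<longrightarrow> j - i < j' - i')" using X1 h(1) by blast
  have Bnz: "uminus ` B \<noteq> B"
  proof
    assume z: "uminus ` B = B"
    obtain i j where "inner P1 i j" using mixX p1.zero_mixed[OF h(1) z] by blast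
    thus False using p1.inner_nz h(1) z by blast
  qed
  have hB: "nq B = {} \<or> lower B" using h(4) Bnz by blast
  have hC: "nq C = {} \<or> lower C" using h(5) Cnz by blast
  have Bfin: "finite B" using p1.fin_blk[OF h(1)] .
  show "B \<subseteq> C \<or> B \<subseteq> uminus ` C"
  proof (cases "nq B = {}")
    case pB: True
    show ?thesis
    proof (cases "nq C = {}")
      case True thus ?thesis using pure_pure[OF h(1-3) pB] by simp
    next
      case False
      hence lC: "lower C" using hC by simp
      have bdC: "\<forall>k\<in>pp C. k \<le> a" "\<forall>k\<in>nq C. b \<le> k" using p2.inner_bounds[OF inn2 h(2) lC] by auto
      have Bs: "B \<subseteq> pp C \<union> nq C" using pure_in_abs[OF h(1-3) pB] .
      show ?thesis
      proof (cases "B \<subseteq> pp C \<or> B \<subseteq> nq C")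
        case True thus ?thesis using pure_lower_split[OF h(1-3) pB] by simp
      next
        case False
        then obtain u v where uv: "u \<in> B" "u \<notin> pp C" "v \<in> B" "v \<notin> nq C" by blast
        have u: "b \<le> u" using uv Bs bdC by blast
        have v: "v \<le> a" using uv Bs bdC by blast
        have all: "\<forall>k\<in>B. k \<le> a \<or> b \<le> k" using Bs bdC by blast
        obtain i' j' where e: "i' \<in> B" "j' \<in> B" "i' \<le> a" "b \<le> j'" "\<forall>k\<in>B. \<not> (i' < k \<and> k < j')"
          using straddle[OF Bfin uv(3) uv(1) v u ab all] by blast
        have absB: "abs ` B = B" using p1.pure_abs[OF h(1) pB] .
        have edge: "is_edge S1 i' j'" unfolding is_edge_def
        proof
          show "i' < j'" using e ab by simp
          show "\<exists>D\<in>S1. i' \<in> D \<and> j' \<in> D \<and> (\<forall>k\<in>D. \<not> (i' < k \<and> k < j'))"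
            using e absB h(1) by (intro bexI[of _ "abs ` B"]) auto
        qed
        have i'pos: "0 < i'" using p1.abs_pos[OF h(1)] e(1) absB by simp
        show ?thesis
        proof (cases "\<forall>B\<in>P1. \<not> mixed B")
          case True
          have "\<not> (\<exists>i j. inner P1 i j)"
          proof
            assume "\<exists>i j. inner P1 i j"
            then obtain B0 where "B0 \<in> P1" "lower B0" unfolding inner_def by blast
            thus False using True p1.lower_mixed by blast
          qed
          hence "\<not> (\<exists>i j. is_edge S1 i j \<and> i \<le> a \<and> a < b \<and> b \<le> j)" using X1 by blast
          thus ?thesis using edge e ab by blast
        next
          case False
          obtain i j where ij: "inner P1 i j" "i \<le> a" "b \<le> j"
            "\<forall>i' j'. is_edge S1 i' j' \<and> i' \<le> a \<and> a < b \<and> b \<le> j' \<and> (i', j') \<noteq> (i, j) \<longrightarrow> j - i < j' - i'"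
            using X1 False by blast
          have "j' < i \<or> j < i' \<or> (i < i' \<and> j' < j)"
            using p1.pure_int[OF ij(1) h(1) pB e(1) e(2) i'pos] e ab by simp
          hence c: "i < i' \<and> j' < j" using e ij ab by auto
          hence "j - i < j' - i'" using ij(4) edge e ab by auto
          thus ?thesis using c by simp
        qed
      qed
    qed
  next
    case False
    hence lB: "lower B" using hB by simp
    obtain i j where ij: "inner P1 i j" "i \<le> a" "b \<le> j" using mixX p1.lower_mixed[OF lB] by blast
    have bdB: "\<forall>k\<in>pp B. k \<le> i" "\<forall>k\<in>nq B. j \<le> k" using p1.inner_bounds[OF ij(1) h(1) lB] by auto
    show ?thesis
    proof (cases "nq C = {}")
      case True
      obtain p q where pq: "p \<in> pp B" "q \<in> nq B" using lB unfolding lower_def mixed_def by blast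
      have pa: "p \<in> abs ` B" "q \<in> abs ` B" using pq by (simp_all add: p1.absB[OF h(1)])
      have "p \<in> abs ` C" "q \<in> abs ` C" using subsetD[OF h(3) pa(1)] subsetD[OF h(3) pa(2)] by simp_all
      hence pC: "p \<in> C" "q \<in> C" using p2.pure_abs[OF h(2) True] by simp_all
      have ppos: "0 < p" using p1.ppD[OF pq(1)] by simp
      have pa': "p \<le> a" using bdB(1) pq(1) ij(2) by fastforce
      have qb: "b \<le> q" using bdB(2) pq(2) ij(3) by fastforce
      show ?thesis using p2.noUV[OF inn2 h(2) pC ppos pa' qb] by simp
    next
      case False
      hence lC: "lower C" using hC by simp
      have bdC: "\<forall>k\<in>pp C. k \<le> a" "\<forall>k\<in>nq C. b \<le> k" using p2.inner_bounds[OF inn2 h(2) lC] by auto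
      have AB: "abs ` B = pp B \<union> nq B" "abs ` C = pp C \<union> nq C" using p1.absB[OF h(1)] p2.absB[OF h(2)] by auto
      have "pp B \<subseteq> pp C"
      proof
        fix p assume p: "p \<in> pp B"
        hence "p \<in> abs ` C" using subsetD[OF h(3)] AB(1) by blast
        hence "p \<in> pp C \<or> p \<in> nq C" using AB(2) by simp
        moreover have "\<not> p \<in> nq C"
        proof
          assume "p \<in> nq C" hence "b \<le> p" using bdC(2) by blast
          moreover have "p \<le> i" using bdB(1) p by blast
          ultimately show False using ij(2) ab by simp
        qed
        ultimately show "p \<in> pp C" by simp
      qed
      moreover have "nq B \<subseteq> nq C"
      proof
        fix q assume q: "q \<in> nq B"
        hence "q \<in> abs ` C" using subsetD[OF h(3)] AB(1) by blast
        hence "q \<in> pp C \<or> q \<in> nq C" using AB(2) by simp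
        moreover have "\<not> q \<in> pp C"
        proof
          assume "q \<in> pp C" hence "q \<le> a" using bdC(1) by blast
          moreover have "j \<le> q" using bdB(2) q by blast
          ultimately show False using ij(3) ab by simp
        qed
        ultimately show "q \<in> nq C" by simp
      qed
      ultimately show ?thesis using p1.sub_of[OF h(1)] by simp
    qed
  qed
qed

end


context ncb begin

lemma zero_pp_ne: "Z \<in> P \<Longrightarrow> uminus ` Z = Z \<Longrightarrow> pp Z \<noteq> {} \<and> finite (pp Z)"
  using zero_mixed fin_pp unfolding mixed_def by blast

lemma noUV0: "Z \<in> P \<Longrightarrow> uminus ` Z = Z \<Longrightarrow> C \<in> P \<Longrightarrow> u \<in> C \<Longrightarrow> v \<in> C \<Longrightarrow> 0 < u
   \<Longrightarrow> u < Min (pp Z) \<Longrightarrow> Max (pp Z) < v \<Longrightarrow> False"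
proof -
  assume h: "Z \<in> P" "uminus ` Z = Z" "C \<in> P" "u \<in> C" "v \<in> C" "0 < u" "u < Min (pp Z)" "Max (pp Z) < v"
  have ne: "pp Z \<noteq> {}" "finite (pp Z)" using zero_pp_ne[OF h(1,2)] by auto
  have mi: "Min (pp Z) \<in> pp Z" "Min (pp Z) \<le> Max (pp Z)" using ne by auto
  show False
  proof (cases "C = Z")
    case True
    hence "u \<in> pp Z" using h(4,6) ppI by simp
    hence "Min (pp Z) \<le> u" using ne by simp
    thus False using h(7) by simp
  next
    case False
    show False using zero_between[OF h(1,2,3) False h(4,5,6) h(7), of ] mi h(8) by simp
  qed
qed

lemma edge_analysis: "inner P i j \<Longrightarrow> B \<in> P \<Longrightarrow> mixed B \<Longrightarrow> i' \<in> abs ` B \<Longrightarrow> j' \<in> abs ` B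
   \<Longrightarrow> j' \<le> i \<or> j \<le> i' \<or> (i' \<le> i \<and> j \<le> j')"
proof -
  assume h: "inner P i j" "B \<in> P" "mixed B" "i' \<in> abs ` B" "j' \<in> abs ` B"
  have "lower B \<or> lower (uminus ` B)" using sep[OF h(2,3) inner_nz[OF h(1) h(2)]] .
  then obtain B' where B': "B' \<in> P" "lower B'" "abs ` B' = abs ` B"
    using h(2) negc by (metis abs_neg)
  have bd: "\<forall>k\<in>pp B'. k \<le> i" "\<forall>k\<in>nq B'. j \<le> k" using inner_bounds[OF h(1) B'(1,2)] by auto
  have e: "abs ` B = pp B' \<union> nq B'" using absB[OF B'(1)] B'(3) by simp
  have "i' \<in> pp B' \<or> i' \<in> nq B'" "j' \<in> pp B' \<or> j' \<in> nq B'" using h(4,5) e by auto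
  thus ?thesis using bd by blast
qed

end

context two begin

lemma pure_cont: "refines P1 P2 \<Longrightarrow> B \<in> P1 \<Longrightarrow> \<not> mixed B \<Longrightarrow> u \<in> abs ` B \<Longrightarrow> v \<in> abs ` B
   \<Longrightarrow> \<exists>C\<in>P2. u \<in> C \<and> v \<in> C"
proof -
  assume h: "refines P1 P2" "B \<in> P1" "\<not> mixed B" "u \<in> abs ` B" "v \<in> abs ` B"
  obtain B' where B': "B' \<in> P1" "nq B' = {}" "abs ` B' = abs ` B"
  proof (cases "nq B = {}")
    case True thus ?thesis using that h(2) by blast
  next
    case False
    hence "pp B = {}" using h(3) unfolding mixed_def by simp
    hence "nq (uminus ` B) = {}" by simp
    thus ?thesis using that p1.negc[OF h(2)] by (metis abs_neg)
  qed
  have "u \<in> B'" "v \<in> B'" using h(4,5) B'(3) p1.pure_abs[OF B'(1,2)] by auto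
  moreover obtain C where "C \<in> P2" "B' \<subseteq> C" using h(1) B'(1) unfolding refines_def by blast
  ultimately show ?thesis by blast
qed

lemma zero_sub: "B \<in> P1 \<Longrightarrow> C \<in> P2 \<Longrightarrow> B \<subseteq> C \<Longrightarrow> uminus ` B = B \<Longrightarrow> uminus ` C = C"
proof -
  assume h: "B \<in> P1" "C \<in> P2" "B \<subseteq> C" "uminus ` B = B"
  obtain k where k: "k \<in> B" using p1.blk_ne[OF h(1)] by blast
  have "-k \<in> B" using k h(4) by (metis imageI)
  hence "k \<in> uminus ` C" using h(3) p1.negI2[of k C] by auto
  moreover have "k \<in> C" using k h(3) by auto
  ultimately have "C = uminus ` C" using p2.blk_eq[OF h(2) p2.negc[OF h(2)]] by blast
  thus ?thesis by simp
qed

lemma dir2_block_core: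
  assumes ref: "refines S1 S2" and Z2: "Z2 \<in> P2" "uminus ` Z2 = Z2"
    and LB: "\<forall>B\<in>P1. lower B \<longrightarrow> (\<exists>c\<in>pp Z2. (\<forall>p\<in>pp B. p \<le> c) \<and> (\<forall>q\<in>nq B. c \<le> q))"
    and ZB: "\<forall>Z\<in>P1. uminus ` Z = Z \<longrightarrow> pp Z \<subseteq> pp Z2"
    and PB: "\<forall>B\<in>P1. nq B = {} \<longrightarrow> (\<forall>k\<in>B. k < Min (pp Z2) \<or> Max (pp Z2) < k)
               \<longrightarrow> \<not> (\<exists>u\<in>B. \<exists>v\<in>B. u < Min (pp Z2) \<and> Max (pp Z2) < v)"
  shows "refines P1 P2"
proof (rule good_ref[OF ref])
  fix B C assume h: "B \<in> P1" "C \<in> P2" "abs ` B \<subseteq> abs ` C" "nq B = {} \<or> lower B \<or> uminus ` B = B"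
    "nq C = {} \<or> lower C \<or> uminus ` C = C"
  have C0: "pp Z2 \<noteq> {}" "finite (pp Z2)" using p2.zero_pp_ne[OF Z2] by auto
  have MinC: "Min (pp Z2) \<in> pp Z2" "Max (pp Z2) \<in> pp Z2" using C0 by auto
  show "B \<subseteq> C \<or> B \<subseteq> uminus ` C"
  proof (cases "uminus ` C = C")
    case True
    have "B \<subseteq> C"
    proof
      fix k assume "k \<in> B"
      hence "k \<in> C \<or> -k \<in> C" using sub_pm[OF h(1,2,3)] by blast
      thus "k \<in> C" using True p2.negI2[of k C] by auto
    qed
    thus ?thesis by simp
  next
    case Cnz: False
    have CZ: "C \<noteq> Z2" using Cnz Z2 by auto
    have hC: "nq C = {} \<or> lower C" using h(5) Cnz by blast
    have hit: "\<And>k. k \<in> pp Z2 \<Longrightarrow> k \<in> abs ` C \<Longrightarrow> False" using p2.zero_hit[OF Z2 h(2)] CZ by blast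
    show ?thesis
    proof (cases "uminus ` B = B")
      case True
      have "pp B \<subseteq> pp Z2" using ZB h(1) True by blast
      moreover obtain k where "k \<in> pp B" using p1.zero_pp_ne[OF h(1) True] by blast
      moreover have "k \<in> abs ` B \<Longrightarrow> k \<in> abs ` C" using h(3) by blast
      ultimately show ?thesis using hit p1.absB[OF h(1)] by blast
    next
      case Bnz: False
      have hB: "nq B = {} \<or> lower B" using h(4) Bnz by blast
      have Cbd: "lower C \<Longrightarrow> (\<forall>p\<in>pp C. \<forall>c\<in>pp Z2. p < c) \<and> (\<forall>q\<in>nq C. \<forall>c\<in>pp Z2. c < q)"
        using p2.zero_lower[OF Z2 h(2)] by blast
      have AB: "abs ` B = pp B \<union> nq B" "abs ` C = pp C \<union> nq C" using p1.absB[OF h(1)] p2.absB[OF h(2)] by auto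
      show ?thesis
      proof (cases "nq B = {}")
        case pB: True
        show ?thesis
        proof (cases "nq C = {}")
          case True thus ?thesis using pure_pure[OF h(1-3) pB] by simp
        next
          case False
          hence lC: "lower C" using hC by simp
          have Bs: "B \<subseteq> pp C \<union> nq C" using pure_in_abs[OF h(1-3) pB] .
          show ?thesis
          proof (cases "B \<subseteq> pp C \<or> B \<subseteq> nq C")
            case True thus ?thesis using pure_lower_split[OF h(1-3) pB] by simp
          next
            case False
            then obtain u v where uv: "u \<in> B" "u \<notin> nq C" "v \<in> B" "v \<notin> pp C" by blast
            have "u \<in> pp C" "v \<in> nq C" using uv Bs by auto
            hence "u < Min (pp Z2)" "Max (pp Z2) < v" using Cbd[OF lC] MinC by auto
            moreover have "\<forall>k\<in>B. k < Min (pp Z2) \<or> Max (pp Z2) < k"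
            proof
              fix k assume "k \<in> B"
              hence "k \<in> pp C \<or> k \<in> nq C" using Bs by auto
              thus "k < Min (pp Z2) \<or> Max (pp Z2) < k" using Cbd[OF lC] MinC by blast
            qed
            ultimately show ?thesis using PB h(1) pB uv(1,3) by blast
          qed
        qed
      next
        case False
        hence lB: "lower B" using hB by simp
        obtain c where c: "c \<in> pp Z2" "\<forall>p\<in>pp B. p \<le> c" "\<forall>q\<in>nq B. c \<le> q" using LB h(1) lB by blast
        obtain p q where pq: "p \<in> pp B" "q \<in> nq B" using lB unfolding lower_def mixed_def by blast
        have pa: "p \<in> abs ` C" "q \<in> abs ` C" using pq AB(1) subsetD[OF h(3)] by auto
        show ?thesis
        proof (cases "nq C = {}")
          case True
          have pC: "p \<in> C" "q \<in> C" using pa p2.pure_abs[OF h(2) True] by simp_all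
          have "p \<noteq> c" using hit c(1) pa(1) by blast
          hence pc: "p < c" using c(2) pq(1) by fastforce
          have "q \<noteq> c" using hit c(1) pa(2) by blast
          hence qc: "c < q" using c(3) pq(2) by fastforce
          show ?thesis using p2.zero_between[OF Z2 h(2) CZ pC(1) pC(2) _ pc qc c(1)] p1.ppD[OF pq(1)] by simp
        next
          case False
          hence lC: "lower C" using hC by simp
          have "pp B \<subseteq> pp C"
          proof
            fix x assume x: "x \<in> pp B"
            hence "x \<in> pp C \<or> x \<in> nq C" using AB subsetD[OF h(3)] by blast
            moreover have "x \<notin> nq C"
            proof
              assume "x \<in> nq C" hence "c < x" using Cbd[OF lC] c(1) by blast
              thus False using c(2) x by fastforce
            qed
            ultimately show "x \<in> pp C" by simp
          qed
          moreover have "nq B \<subseteq> nq C"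
          proof
            fix x assume x: "x \<in> nq B"
            hence "x \<in> pp C \<or> x \<in> nq C" using AB subsetD[OF h(3)] by blast
            moreover have "x \<notin> pp C"
            proof
              assume "x \<in> pp C" hence "x < c" using Cbd[OF lC] c(1) by blast
              thus False using c(3) x by fastforce
            qed
            ultimately show "x \<in> nq C" by simp
          qed
          ultimately show ?thesis using p1.sub_of[OF h(1)] by simp
        qed
      qed
    qed
  qed
qed

end


lemma sub_ppnq: "B \<subseteq> C \<Longrightarrow> pp B \<subseteq> pp C \<and> nq B \<subseteq> nq C"
  unfolding pp_def nq_def by auto

context two begin

lemma mk_edge: "B \<in> P1 \<Longrightarrow> nq B = {} \<Longrightarrow> u \<in> B \<Longrightarrow> v \<in> B \<Longrightarrow> u \<le> L \<Longrightarrow> R \<le> v \<Longrightarrow> L < R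
   \<Longrightarrow> \<forall>k\<in>B. k \<le> L \<or> R \<le> k \<Longrightarrow> \<exists>i' j'. is_edge S1 i' j' \<and> i' \<le> L \<and> R \<le> j' \<and> i' \<in> B \<and> j' \<in> B"
proof -
  assume h: "B \<in> P1" "nq B = {}" "u \<in> B" "v \<in> B" "u \<le> L" "R \<le> v" "L < R" "\<forall>k\<in>B. k \<le> L \<or> R \<le> k"
  obtain i' j' where e: "i' \<in> B" "j' \<in> B" "i' \<le> L" "R \<le> j'" "\<forall>k\<in>B. \<not> (i' < k \<and> k < j')"
    using straddle[OF p1.fin_blk[OF h(1)] h(3,4,5,6,7,8)] by blast
  have absB: "abs ` B = B" using p1.pure_abs[OF h(1,2)] .
  have "is_edge S1 i' j'" unfolding is_edge_def
  proof
    show "i' < j'" using e h(7) by simp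
    show "\<exists>D\<in>S1. i' \<in> D \<and> j' \<in> D \<and> (\<forall>k\<in>D. \<not> (i' < k \<and> k < j'))"
      using e absB h(1) by (intro bexI[of _ "abs ` B"]) auto
  qed
  thus ?thesis using e by blast
qed

lemma blk_common:
  assumes Z2: "Z2 \<in> P2" "uminus ` Z2 = Z2"
  shows "pp Z2 \<noteq> {} \<and> finite (pp Z2) \<and> Min (pp Z2) \<in> pp Z2 \<and> Max (pp Z2) \<in> pp Z2 \<and> Min (pp Z2) \<le> Max (pp Z2)"
  using p2.zero_pp_ne[OF Z2] by auto

lemma blk3:
  assumes ref: "refines S1 S2" and Z2: "Z2 \<in> P2" "uminus ` Z2 = Z2"
    and Z1: "Z1 \<in> P1" "uminus ` Z1 = Z1" and sub: "pp Z1 \<subseteq> pp Z2"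
  shows "refines P1 P2"
proof (rule dir2_block_core[OF ref Z2])
  obtain d where d: "d \<in> pp Z1" using p1.zero_pp_ne[OF Z1] by blast
  have dC: "d \<in> pp Z2" using d sub by blast
  have cm: "pp Z2 \<noteq> {}" "finite (pp Z2)" using blk_common[OF Z2] by auto
  show "\<forall>B\<in>P1. lower B \<longrightarrow> (\<exists>c\<in>pp Z2. (\<forall>p\<in>pp B. p \<le> c) \<and> (\<forall>q\<in>nq B. c \<le> q))"
  proof (intro ballI impI)
    fix B assume B: "B \<in> P1" "lower B"
    have zl: "(\<forall>p\<in>pp B. p < d) \<and> (\<forall>q\<in>nq B. d < q)" using p1.zero_lower[OF Z1 B d] .
    have "(\<forall>p\<in>pp B. p \<le> d) \<and> (\<forall>q\<in>nq B. d \<le> q)"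
    proof
      show "\<forall>p\<in>pp B. p \<le> d" using zl by (simp add: less_imp_le)
      show "\<forall>q\<in>nq B. d \<le> q" using zl by (simp add: less_imp_le)
    qed
    thus "\<exists>c\<in>pp Z2. (\<forall>p\<in>pp B. p \<le> c) \<and> (\<forall>q\<in>nq B. c \<le> q)" using dC by (intro bexI[of _ d])
  qed
  show "\<forall>Z\<in>P1. uminus ` Z = Z \<longrightarrow> pp Z \<subseteq> pp Z2"
  proof (intro ballI impI)
    fix Z assume "Z \<in> P1" "uminus ` Z = Z"
    hence "Z = Z1" using p1.zuniq[OF _ Z1(1) _ Z1(2)] by simp
    thus "pp Z \<subseteq> pp Z2" using sub by simp
  qed
  show "\<forall>B\<in>P1. nq B = {} \<longrightarrow> (\<forall>k\<in>B. k < Min (pp Z2) \<or> Max (pp Z2) < k)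
               \<longrightarrow> \<not> (\<exists>u\<in>B. \<exists>v\<in>B. u < Min (pp Z2) \<and> Max (pp Z2) < v)"
  proof (intro ballI impI notI)
    fix B assume B: "B \<in> P1" "nq B = {}" and "\<exists>u\<in>B. \<exists>v\<in>B. u < Min (pp Z2) \<and> Max (pp Z2) < v"
    then obtain u v where uv: "u \<in> B" "v \<in> B" "u < Min (pp Z2)" "Max (pp Z2) < v" by blast
    have m1: "Min (pp Z2) \<le> d" using dC cm by simp
    have m2: "d \<le> Max (pp Z2)" using dC cm by simp
    have ud: "u < d" "d < v" using uv(3,4) m1 m2 by linarith+
    have nZ: "nq Z1 \<noteq> {}" using p1.zero_pp_ne[OF Z1] p1.eq_of_zero[OF Z1(2)] by simp
    have BZ: "B \<noteq> Z1" using B(2) nZ by blast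
    have upos: "0 < u" using p1.abs_pos[OF B(1)] uv(1) p1.pure_abs[OF B] by simp
    show False using p1.zero_between[OF Z1 B(1) BZ uv(1) uv(2) upos ud(1) ud(2) d] .
  qed
qed

lemma blk4:
  assumes ref: "refines S1 S2" and Z2: "Z2 \<in> P2" "uminus ` Z2 = Z2"
    and inn: "inner P1 i j" and ij: "i \<in> pp Z2" "j \<in> pp Z2"
  shows "refines P1 P2"
proof (rule dir2_block_core[OF ref Z2])
  have cm: "pp Z2 \<noteq> {}" "finite (pp Z2)" using blk_common[OF Z2] by auto
  have lt: "i < j" using p1.inner_lt[OF inn] .
  show "\<forall>B\<in>P1. lower B \<longrightarrow> (\<exists>c\<in>pp Z2. (\<forall>p\<in>pp B. p \<le> c) \<and> (\<forall>q\<in>nq B. c \<le> q))"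
  proof (intro ballI impI)
    fix B assume B: "B \<in> P1" "lower B"
    have "(\<forall>p\<in>pp B. p \<le> i) \<and> (\<forall>q\<in>nq B. j \<le> q)" using p1.inner_bounds[OF inn B] .
    hence "(\<forall>p\<in>pp B. p \<le> i) \<and> (\<forall>q\<in>nq B. i \<le> q)" using lt by force
    thus "\<exists>c\<in>pp Z2. (\<forall>p\<in>pp B. p \<le> c) \<and> (\<forall>q\<in>nq B. c \<le> q)" using ij(1) by blast
  qed
  show "\<forall>Z\<in>P1. uminus ` Z = Z \<longrightarrow> pp Z \<subseteq> pp Z2" using p1.inner_nz[OF inn] by blast
  show "\<forall>B\<in>P1. nq B = {} \<longrightarrow> (\<forall>k\<in>B. k < Min (pp Z2) \<or> Max (pp Z2) < k)
               \<longrightarrow> \<not> (\<exists>u\<in>B. \<exists>v\<in>B. u < Min (pp Z2) \<and> Max (pp Z2) < v)"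
  proof (intro ballI impI notI)
    fix B assume B: "B \<in> P1" "nq B = {}" and "\<exists>u\<in>B. \<exists>v\<in>B. u < Min (pp Z2) \<and> Max (pp Z2) < v"
    then obtain u v where uv: "u \<in> B" "v \<in> B" "u < Min (pp Z2)" "Max (pp Z2) < v" by blast
    have "Min (pp Z2) \<le> i" "j \<le> Max (pp Z2)" using ij cm by auto
    hence ud: "u \<le> i" "j \<le> v" using uv by auto
    have "0 < u" using p1.abs_pos[OF B(1)] uv(1) p1.pure_abs[OF B] by simp
    thus False using p1.noUV[OF inn B(1) uv(1) uv(2) _ ud] by blast
  qed
qed

lemma blk5a:
  assumes ref: "refines S1 S2" and Z2: "Z2 \<in> P2" "uminus ` Z2 = Z2"
    and inn: "inner P1 i j" and ij: "i < Min (pp Z2)" "Max (pp Z2) < j"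
    and mn: "\<forall>i' j'. is_edge S1 i' j' \<and> i' < Min (pp Z2) \<and> Max (pp Z2) < j' \<longrightarrow> j - i \<le> j' - i'"
  shows "refines P1 P2"
proof (rule dir2_block_core[OF ref Z2])
  have cm: "Min (pp Z2) \<in> pp Z2" "Min (pp Z2) \<le> Max (pp Z2)" using blk_common[OF Z2] by auto
  show "\<forall>B\<in>P1. lower B \<longrightarrow> (\<exists>c\<in>pp Z2. (\<forall>p\<in>pp B. p \<le> c) \<and> (\<forall>q\<in>nq B. c \<le> q))"
  proof (intro ballI impI)
    fix B assume B: "B \<in> P1" "lower B"
    have "(\<forall>p\<in>pp B. p \<le> i) \<and> (\<forall>q\<in>nq B. j \<le> q)" using p1.inner_bounds[OF inn B] .
    hence "(\<forall>p\<in>pp B. p \<le> Min (pp Z2)) \<and> (\<forall>q\<in>nq B. Min (pp Z2) \<le> q)" using ij cm by force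
    thus "\<exists>c\<in>pp Z2. (\<forall>p\<in>pp B. p \<le> c) \<and> (\<forall>q\<in>nq B. c \<le> q)" using cm(1) by blast
  qed
  show "\<forall>Z\<in>P1. uminus ` Z = Z \<longrightarrow> pp Z \<subseteq> pp Z2" using p1.inner_nz[OF inn] by blast
  show "\<forall>B\<in>P1. nq B = {} \<longrightarrow> (\<forall>k\<in>B. k < Min (pp Z2) \<or> Max (pp Z2) < k)
               \<longrightarrow> \<not> (\<exists>u\<in>B. \<exists>v\<in>B. u < Min (pp Z2) \<and> Max (pp Z2) < v)"
  proof (intro ballI impI notI)
    fix B assume B: "B \<in> P1" "nq B = {}" and all: "\<forall>k\<in>B. k < Min (pp Z2) \<or> Max (pp Z2) < k"
      and "\<exists>u\<in>B. \<exists>v\<in>B. u < Min (pp Z2) \<and> Max (pp Z2) < v"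
    then obtain u v where uv: "u \<in> B" "v \<in> B" "u < Min (pp Z2)" "Max (pp Z2) < v" by blast
    have all': "\<forall>k\<in>B. k \<le> Min (pp Z2) - 1 \<or> Max (pp Z2) + 1 \<le> k" using all by force
    obtain i' j' where e: "is_edge S1 i' j'" "i' \<le> Min (pp Z2) - 1" "Max (pp Z2) + 1 \<le> j'" "i' \<in> B" "j' \<in> B"
      using mk_edge[OF B uv(1,2) _ _ _ all', of ] uv cm by force
    have "0 < i'" using p1.abs_pos[OF B(1)] e(4) p1.pure_abs[OF B] by simp
    moreover have "i' < j'" using e cm by simp
    ultimately have "j' < i \<or> j < i' \<or> (i < i' \<and> j' < j)" using p1.pure_int[OF inn B e(4) e(5)] by blast
    hence "i < i' \<and> j' < j" using e ij cm by auto
    moreover have "j - i \<le> j' - i'" using mn e by force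
    ultimately show False by simp
  qed
qed

lemma blk5b:
  assumes ref: "refines S1 S2" and Z2: "Z2 \<in> P2" "uminus ` Z2 = Z2"
    and nm: "\<forall>B\<in>P1. \<not> mixed B"
    and ne: "\<not> (\<exists>i j. is_edge S1 i j \<and> i < Min (pp Z2) \<and> Max (pp Z2) < j)"
  shows "refines P1 P2"
proof (rule dir2_block_core[OF ref Z2])
  have cm: "Min (pp Z2) \<in> pp Z2" "Min (pp Z2) \<le> Max (pp Z2)" using blk_common[OF Z2] by auto
  show "\<forall>B\<in>P1. lower B \<longrightarrow> (\<exists>c\<in>pp Z2. (\<forall>p\<in>pp B. p \<le> c) \<and> (\<forall>q\<in>nq B. c \<le> q))"
    using nm p1.lower_mixed by blast
  show "\<forall>Z\<in>P1. uminus ` Z = Z \<longrightarrow> pp Z \<subseteq> pp Z2" using nm p1.zero_mixed by blast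
  show "\<forall>B\<in>P1. nq B = {} \<longrightarrow> (\<forall>k\<in>B. k < Min (pp Z2) \<or> Max (pp Z2) < k)
               \<longrightarrow> \<not> (\<exists>u\<in>B. \<exists>v\<in>B. u < Min (pp Z2) \<and> Max (pp Z2) < v)"
  proof (intro ballI impI notI)
    fix B assume B: "B \<in> P1" "nq B = {}" and all: "\<forall>k\<in>B. k < Min (pp Z2) \<or> Max (pp Z2) < k"
      and "\<exists>u\<in>B. \<exists>v\<in>B. u < Min (pp Z2) \<and> Max (pp Z2) < v"
    then obtain u v where uv: "u \<in> B" "v \<in> B" "u < Min (pp Z2)" "Max (pp Z2) < v" by blast
    have all': "\<forall>k\<in>B. k \<le> Min (pp Z2) - 1 \<or> Max (pp Z2) + 1 \<le> k" using all by force
    obtain i' j' where e: "is_edge S1 i' j'" "i' \<le> Min (pp Z2) - 1" "Max (pp Z2) + 1 \<le> j'"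
      using mk_edge[OF B uv(1,2) _ _ _ all', of ] uv cm by force
    thus False using ne by force
  qed
qed

end


context two begin

lemma lower_of_sub: "B1 \<in> P1 \<Longrightarrow> lower B1 \<Longrightarrow> C \<in> P2 \<Longrightarrow> B1 \<subseteq> C \<Longrightarrow> uminus ` C \<noteq> C \<Longrightarrow> lower C"
proof -
  assume h: "B1 \<in> P1" "lower B1" "C \<in> P2" "B1 \<subseteq> C" "uminus ` C \<noteq> C"
  obtain p q where pq: "p \<in> pp B1" "q \<in> nq B1" using h(2) unfolding lower_def mixed_def by blast
  have pqlt: "p < q" using h(2) pq unfolding lower_def by blast
  have s: "pp B1 \<subseteq> pp C" "nq B1 \<subseteq> nq C" using sub_ppnq[OF h(4)] by auto
  have pqC: "p \<in> pp C" "q \<in> nq C" using pq s by auto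
  hence mC: "mixed C" unfolding mixed_def by blast
  have "lower C \<or> lower (uminus ` C)" using p2.sep[OF h(3) mC h(5)] .
  moreover have "\<not> lower (uminus ` C)"
  proof
    assume "lower (uminus ` C)"
    hence "\<forall>x\<in>nq C. \<forall>y\<in>pp C. x < y" unfolding lower_def by simp
    thus False using pqC pqlt by fastforce
  qed
  ultimately show ?thesis by simp
qed

lemma d1_empty: "refines P1 P2 \<Longrightarrow> \<forall>C\<in>P2. \<not> mixed C \<Longrightarrow> B \<in> P1 \<Longrightarrow> \<not> mixed B"
proof
  assume h: "refines P1 P2" "\<forall>C\<in>P2. \<not> mixed C" "B \<in> P1" "mixed B"
  obtain C where C: "C \<in> P2" "B \<subseteq> C" using h(1,3) unfolding refines_def by blast
  have "mixed C" using h(4) sub_ppnq[OF C(2)] unfolding mixed_def by blast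
  thus False using h(2) C(1) by blast
qed

lemma d1_zero: "refines P1 P2 \<Longrightarrow> Z \<in> P1 \<Longrightarrow> uminus ` Z = Z \<Longrightarrow> \<exists>C\<in>P2. uminus ` C = C \<and> Z \<subseteq> C"
proof -
  assume h: "refines P1 P2" "Z \<in> P1" "uminus ` Z = Z"
  obtain C where C: "C \<in> P2" "Z \<subseteq> C" using h(1,2) unfolding refines_def by blast
  thus ?thesis using zero_sub[OF h(2) C(1) C(2) h(3)] by blast
qed

lemma d1_edge_noedge:
  assumes ref: "refines P1 P2" and inn2: "inner P2 a b" and nm: "\<forall>B\<in>P1. \<not> mixed B"
  shows "\<not> (\<exists>i j. is_edge S1 i j \<and> i \<le> a \<and> a < b \<and> b \<le> j)"
proof
  assume "\<exists>i j. is_edge S1 i j \<and> i \<le> a \<and> a < b \<and> b \<le> j"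
  then obtain i j where ij: "is_edge S1 i j" "i \<le> a" "b \<le> j" by blast
  obtain B where B: "B \<in> P1" "i \<in> abs ` B" "j \<in> abs ` B" using edge1[OF ij(1)] by blast
  obtain C where C: "C \<in> P2" "i \<in> C" "j \<in> C" using pure_cont[OF ref B(1) _ B(2) B(3)] nm B(1) by blast
  have "0 < i" using p1.abs_pos[OF B(1) B(2)] .
  thus False using p2.noUV[OF inn2 C(1) C(2) C(3) _ ij(2) ij(3)] by blast
qed

lemma d1_edge_edge:
  assumes ref: "refines P1 P2" and inn2: "inner P2 a b" and inn1: "inner P1 i j"
  shows "i \<le> a \<and> b \<le> j \<and> (\<forall>i' j'. is_edge S1 i' j' \<and> i' \<le> a \<and> a < b \<and> b \<le> j' \<and> (i', j') \<noteq> (i, j)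
                  \<longrightarrow> j - i < j' - i')"
proof -
  obtain B1 where B1: "B1 \<in> P1" "lower B1" "i \<in> pp B1" "j \<in> nq B1" using inn1 unfolding inner_def by blast
  obtain C where C: "C \<in> P2" "B1 \<subseteq> C" using ref B1(1) unfolding refines_def by blast
  have lC: "lower C" using lower_of_sub[OF B1(1,2) C(1,2) p2.inner_nz[OF inn2 C(1)]] .
  have s: "pp B1 \<subseteq> pp C" "nq B1 \<subseteq> nq C" using sub_ppnq[OF C(2)] by auto
  have bd: "\<forall>p\<in>pp C. p \<le> a" "\<forall>q\<in>nq C. b \<le> q" using p2.inner_bounds[OF inn2 C(1) lC] by auto
  have ia: "i \<le> a" using bd(1) s(1) B1(3) by blast
  have bj: "b \<le> j" using bd(2) s(2) B1(4) by blast
  have ab: "a < b" using p2.inner_lt[OF inn2] .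
  have "\<forall>i' j'. is_edge S1 i' j' \<and> i' \<le> a \<and> a < b \<and> b \<le> j' \<and> (i', j') \<noteq> (i, j) \<longrightarrow> j - i < j' - i'"
  proof (intro allI impI)
    fix i' j' assume h: "is_edge S1 i' j' \<and> i' \<le> a \<and> a < b \<and> b \<le> j' \<and> (i', j') \<noteq> (i, j)"
    obtain B where B: "B \<in> P1" "i' \<in> abs ` B" "j' \<in> abs ` B" using edge1 h by blast
    show "j - i < j' - i'"
    proof (cases "mixed B")
      case False
      obtain C' where C': "C' \<in> P2" "i' \<in> C'" "j' \<in> C'" using pure_cont[OF ref B(1) False B(2) B(3)] by blast
      have "0 < i'" using p1.abs_pos[OF B(1) B(2)] .
      thus ?thesis using p2.noUV[OF inn2 C'(1) C'(2) C'(3)] h by blast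
    next
      case True
      have "j' \<le> i \<or> j \<le> i' \<or> (i' \<le> i \<and> j \<le> j')" using p1.edge_analysis[OF inn1 B(1) True B(2) B(3)] .
      thus ?thesis using h ia bj ab by auto
    qed
  qed
  thus ?thesis using ia bj by blast
qed

lemma d1_block_zero: "refines P1 P2 \<Longrightarrow> Z2 \<in> P2 \<Longrightarrow> uminus ` Z2 = Z2 \<Longrightarrow> Z1 \<in> P1 \<Longrightarrow> uminus ` Z1 = Z1
   \<Longrightarrow> pp Z1 \<subseteq> pp Z2"
proof -
  assume h: "refines P1 P2" "Z2 \<in> P2" "uminus ` Z2 = Z2" "Z1 \<in> P1" "uminus ` Z1 = Z1"
  obtain C where C: "C \<in> P2" "uminus ` C = C" "Z1 \<subseteq> C" using d1_zero[OF h(1,4,5)] by blast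
  have "C = Z2" using p2.zuniq[OF C(1) h(2) C(2) h(3)] .
  thus ?thesis using sub_ppnq[OF C(3)] by simp
qed

lemma d1_block_noedge:
  assumes ref: "refines P1 P2" and Z2: "Z2 \<in> P2" "uminus ` Z2 = Z2" and nm: "\<forall>B\<in>P1. \<not> mixed B"
  shows "\<not> (\<exists>i j. is_edge S1 i j \<and> i < Min (pp Z2) \<and> Max (pp Z2) < j)"
proof
  assume "\<exists>i j. is_edge S1 i j \<and> i < Min (pp Z2) \<and> Max (pp Z2) < j"
  then obtain i j where ij: "is_edge S1 i j" "i < Min (pp Z2)" "Max (pp Z2) < j" by blast
  obtain B where B: "B \<in> P1" "i \<in> abs ` B" "j \<in> abs ` B" using edge1[OF ij(1)] by blast
  obtain C where C: "C \<in> P2" "i \<in> C" "j \<in> C" using pure_cont[OF ref B(1) _ B(2) B(3)] nm B(1) by blast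
  have "0 < i" using p1.abs_pos[OF B(1) B(2)] .
  thus False using p2.noUV0[OF Z2 C(1) C(2) C(3) _ ij(2) ij(3)] by blast
qed

lemma d1_block_edge:
  assumes ref: "refines P1 P2" and Z2: "Z2 \<in> P2" "uminus ` Z2 = Z2" and inn1: "inner P1 i j"
  shows "(i \<in> pp Z2 \<and> j \<in> pp Z2) \<or> (i < Min (pp Z2) \<and> Max (pp Z2) < j \<and>
          (\<forall>i' j'. is_edge S1 i' j' \<and> i' < Min (pp Z2) \<and> Max (pp Z2) < j' \<longrightarrow> j - i \<le> j' - i'))"
proof -
  obtain B1 where B1: "B1 \<in> P1" "lower B1" "i \<in> pp B1" "j \<in> nq B1" using inn1 unfolding inner_def by blast
  obtain C where C: "C \<in> P2" "B1 \<subseteq> C" using ref B1(1) unfolding refines_def by blast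
  have s: "pp B1 \<subseteq> pp C" "nq B1 \<subseteq> nq C" using sub_ppnq[OF C(2)] by auto
  have cm: "pp Z2 \<noteq> {}" "finite (pp Z2)" "Min (pp Z2) \<in> pp Z2" "Max (pp Z2) \<in> pp Z2" "Min (pp Z2) \<le> Max (pp Z2)"
    using blk_common[OF Z2] by auto
  show ?thesis
  proof (cases "C = Z2")
    case True
    have "i \<in> pp Z2" using s(1) B1(3) True by blast
    moreover have "j \<in> pp Z2" using s(2) B1(4) True p2.eq_of_zero[OF Z2(2)] by auto
    ultimately show ?thesis by simp
  next
    case False
    have Cnz: "uminus ` C \<noteq> C" using p2.zuniq[OF C(1) Z2(1) _ Z2(2)] False by blast
    have lC: "lower C" using lower_of_sub[OF B1(1,2) C(1,2) Cnz] .
    have zl: "(\<forall>p\<in>pp C. \<forall>c\<in>pp Z2. p < c) \<and> (\<forall>q\<in>nq C. \<forall>c\<in>pp Z2. c < q)"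
      using p2.zero_lower[OF Z2 C(1) lC] by blast
    have ii: "i < Min (pp Z2)" using zl s(1) B1(3) cm(3) by blast
    have jj: "Max (pp Z2) < j" using zl s(2) B1(4) cm(4) by blast
    have "\<forall>i' j'. is_edge S1 i' j' \<and> i' < Min (pp Z2) \<and> Max (pp Z2) < j' \<longrightarrow> j - i \<le> j' - i'"
    proof (intro allI impI)
      fix i' j' assume h: "is_edge S1 i' j' \<and> i' < Min (pp Z2) \<and> Max (pp Z2) < j'"
      obtain B where B: "B \<in> P1" "i' \<in> abs ` B" "j' \<in> abs ` B" using edge1 h by blast
      show "j - i \<le> j' - i'"
      proof (cases "mixed B")
        case False
        obtain C' where C': "C' \<in> P2" "i' \<in> C'" "j' \<in> C'" using pure_cont[OF ref B(1) False B(2) B(3)] by blast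
        have "0 < i'" using p1.abs_pos[OF B(1) B(2)] .
        thus ?thesis using p2.noUV0[OF Z2 C'(1) C'(2) C'(3)] h by blast
      next
        case True
        have "j' \<le> i \<or> j \<le> i' \<or> (i' \<le> i \<and> j \<le> j')" using p1.edge_analysis[OF inn1 B(1) True B(2) B(3)] .
        thus ?thesis using h ii jj cm(5) by auto
      qed
    qed
    thus ?thesis using ii jj by blast
  qed
qed

end


definition RHS :: "int set set \<Rightarrow> int set set \<Rightarrow> xval \<Rightarrow> xval \<Rightarrow> bool" where
  "RHS \<sigma>1 \<sigma>2 x1 x2 \<longleftrightarrow>
    ( (x1 = XEmpty \<and> x2 = XEmpty)
    \<or> (\<exists>a b. x2 = XEdge a b \<and> is_edge \<sigma>2 a b \<and>
         ((\<exists>i j. x1 = XEdge i j \<and> is_edge \<sigma>1 i j \<and> i \<le> a \<and> a < b \<and> b \<le> j \<and>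
              (\<forall>i' j'. is_edge \<sigma>1 i' j' \<and> i' \<le> a \<and> a < b \<and> b \<le> j' \<and> (i', j') \<noteq> (i, j)
                  \<longrightarrow> j - i < j' - i'))
          \<or> (x1 = XEmpty \<and> \<not> (\<exists>i j. is_edge \<sigma>1 i j \<and> i \<le> a \<and> a < b \<and> b \<le> j))))
    \<or> (\<exists>C D. x2 = XBlock C \<and> C \<in> \<sigma>2 \<and> x1 = XBlock D \<and> D \<in> \<sigma>1 \<and> D \<subseteq> C)
    \<or> (\<exists>C i j. x2 = XBlock C \<and> C \<in> \<sigma>2 \<and> x1 = XEdge i j \<and> is_edge \<sigma>1 i j \<and> i \<in> C \<and> j \<in> C)
    \<or> (\<exists>C. x2 = XBlock C \<and> C \<in> \<sigma>2 \<and>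
         ((\<exists>i j. x1 = XEdge i j \<and> is_edge \<sigma>1 i j \<and> i < Min C \<and> Max C < j \<and>
              (\<forall>i' j'. is_edge \<sigma>1 i' j' \<and> i' < Min C \<and> Max C < j' \<longrightarrow> j - i \<le> j' - i'))
          \<or> (x1 = XEmpty \<and> \<not> (\<exists>i j. is_edge \<sigma>1 i j \<and> i < Min C \<and> Max C < j)))) )"


lemma RHS_E0: "RHS s1 s2 x1 XEmpty \<Longrightarrow> x1 = XEmpty" by (simp add: RHS_def)

lemma RHS_E2: "RHS s1 s2 x1 (XEdge a b) \<Longrightarrow>
   (\<exists>i j. x1 = XEdge i j \<and> is_edge s1 i j \<and> i \<le> a \<and> a < b \<and> b \<le> j \<and>
              (\<forall>i' j'. is_edge s1 i' j' \<and> i' \<le> a \<and> a < b \<and> b \<le> j' \<and> (i', j') \<noteq> (i, j)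
                  \<longrightarrow> j - i < j' - i'))
          \<or> (x1 = XEmpty \<and> \<not> (\<exists>i j. is_edge s1 i j \<and> i \<le> a \<and> a < b \<and> b \<le> j))"
  unfolding RHS_def by (elim disjE exE conjE) simp_all

lemma RHS_E3: "RHS s1 s2 x1 (XBlock C) \<Longrightarrow>
      (\<exists>D. x1 = XBlock D \<and> D \<subseteq> C)
      \<or> (\<exists>i j. x1 = XEdge i j \<and> i \<in> C \<and> j \<in> C)
      \<or> (\<exists>i j. x1 = XEdge i j \<and> i < Min C \<and> Max C < j \<and>
              (\<forall>i' j'. is_edge s1 i' j' \<and> i' < Min C \<and> Max C < j' \<longrightarrow> j - i \<le> j' - i'))
      \<or> (x1 = XEmpty \<and> \<not> (\<exists>i j. is_edge s1 i j \<and> i < Min C \<and> Max C < j))"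
  unfolding RHS_def by (elim disjE exE conjE) simp_all

lemma RHS_I1: "RHS s1 s2 XEmpty XEmpty" unfolding RHS_def by simp

lemma RHS_I2a: "is_edge s2 a b \<Longrightarrow> is_edge s1 i j \<Longrightarrow> i \<le> a \<Longrightarrow> a < b \<Longrightarrow> b \<le> j \<Longrightarrow>
   (\<forall>i' j'. is_edge s1 i' j' \<and> i' \<le> a \<and> a < b \<and> b \<le> j' \<and> (i', j') \<noteq> (i, j) \<longrightarrow> j - i < j' - i')
   \<Longrightarrow> RHS s1 s2 (XEdge i j) (XEdge a b)"
  unfolding RHS_def apply (rule disjI2, rule disjI1) by blast

lemma RHS_I2b: "is_edge s2 a b \<Longrightarrow> \<not> (\<exists>i j. is_edge s1 i j \<and> i \<le> a \<and> a < b \<and> b \<le> j)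
   \<Longrightarrow> RHS s1 s2 XEmpty (XEdge a b)"
  unfolding RHS_def apply (rule disjI2, rule disjI1) by blast

lemma RHS_I3: "C \<in> s2 \<Longrightarrow> D \<in> s1 \<Longrightarrow> D \<subseteq> C \<Longrightarrow> RHS s1 s2 (XBlock D) (XBlock C)"
  unfolding RHS_def apply (rule disjI2, rule disjI2, rule disjI1) by blast

lemma RHS_I4: "C \<in> s2 \<Longrightarrow> is_edge s1 i j \<Longrightarrow> i \<in> C \<Longrightarrow> j \<in> C \<Longrightarrow> RHS s1 s2 (XEdge i j) (XBlock C)"
  unfolding RHS_def apply (rule disjI2, rule disjI2, rule disjI2, rule disjI1) by blast

lemma RHS_I5a: "C \<in> s2 \<Longrightarrow> is_edge s1 i j \<Longrightarrow> i < Min C \<Longrightarrow> Max C < j \<Longrightarrow>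
   (\<forall>i' j'. is_edge s1 i' j' \<and> i' < Min C \<and> Max C < j' \<longrightarrow> j - i \<le> j' - i')
   \<Longrightarrow> RHS s1 s2 (XEdge i j) (XBlock C)"
  unfolding RHS_def apply (rule disjI2, rule disjI2, rule disjI2, rule disjI2) by blast

lemma RHS_I5b: "C \<in> s2 \<Longrightarrow> \<not> (\<exists>i j. is_edge s1 i j \<and> i < Min C \<and> Max C < j)
   \<Longrightarrow> RHS s1 s2 XEmpty (XBlock C)"
  unfolding RHS_def apply (rule disjI2, rule disjI2, rule disjI2, rule disjI2) by blast


context two begin

lemma x1_nonempty_mixed: "snd (psi n P1) \<noteq> XEmpty \<Longrightarrow> \<exists>B\<in>P1. mixed B"
proof (cases "snd (psi n P1)")
  case XEmpty assume "snd (psi n P1) \<noteq> XEmpty" thus ?thesis using XEmpty by simp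
next
  case (XEdge i j)
  have "inner P1 i j" using p1.x_edge[OF XEdge] .
  then obtain B where "B \<in> P1" "lower B" unfolding inner_def by blast
  thus ?thesis using p1.lower_mixed by blast
next
  case (XBlock D)
  obtain Z where "Z \<in> P1" "uminus ` Z = Z" using p1.x_block[OF XBlock] by blast
  thus ?thesis using p1.zero_mixed by blast
qed

lemma dir1: "refines P1 P2 \<Longrightarrow> RHS S1 S2 (snd (psi n P1)) (snd (psi n P2))"
proof -
  assume ref: "refines P1 P2"
  show ?thesis
  proof (cases "snd (psi n P2)")
    case XEmpty
    have nm2: "\<forall>C\<in>P2. \<not> mixed C" using p2.x_empty[OF XEmpty] by blast
    have nm1: "\<forall>B\<in>P1. \<not> mixed B" using d1_empty[OF ref nm2] by blast
    have "snd (psi n P1) = XEmpty" using x1_nonempty_mixed nm1 by blast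
    thus ?thesis using XEmpty RHS_I1 by simp
  next
    case (XEdge a b)
    have inn2: "inner P2 a b" using p2.x_edge[OF XEdge] .
    have e2: "is_edge S2 a b" using p2.inner_edge[OF inn2] .
    have ab: "a < b" using p2.inner_lt[OF inn2] .
    show ?thesis
    proof (cases "snd (psi n P1)")
      case XEmpty
      have nm1: "\<forall>B\<in>P1. \<not> mixed B" using p1.x_empty[OF XEmpty] by blast
      have "\<not> (\<exists>i j. is_edge S1 i j \<and> i \<le> a \<and> a < b \<and> b \<le> j)" using d1_edge_noedge[OF ref inn2 nm1] .
      thus ?thesis using XEmpty \<open>snd (psi n P2) = XEdge a b\<close> RHS_I2b[OF e2] by simp
    next
      case (XEdge i j)
      have inn1: "inner P1 i j" using p1.x_edge[OF XEdge] .
      have e1: "is_edge S1 i j" using p1.inner_edge[OF inn1] .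
      have d: "i \<le> a \<and> b \<le> j \<and> (\<forall>i' j'. is_edge S1 i' j' \<and> i' \<le> a \<and> a < b \<and> b \<le> j' \<and> (i', j') \<noteq> (i, j)
                  \<longrightarrow> j - i < j' - i')" using d1_edge_edge[OF ref inn2 inn1] .
      have "RHS S1 S2 (XEdge i j) (XEdge a b)"
        using RHS_I2a[OF e2 e1 _ ab] d by blast
      thus ?thesis using XEdge \<open>snd (psi n P2) = XEdge a b\<close> by simp
    next
      case (XBlock D)
      obtain Z where Z: "Z \<in> P1" "uminus ` Z = Z" using p1.x_block[OF XBlock] by blast
      obtain C where "C \<in> P2" "uminus ` C = C" using d1_zero[OF ref Z] by blast
      thus ?thesis using p2.inner_nz[OF inn2] by blast
    qed
  next
    case (XBlock C0)
    obtain Z2 where Z2: "Z2 \<in> P2" "uminus ` Z2 = Z2" "C0 = pp Z2" using p2.x_block[OF XBlock] by blast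
    have C0S: "C0 \<in> S2" using Z2 p2.zero_abs[OF Z2(1,2)] by (metis image_eqI)
    show ?thesis
    proof (cases "snd (psi n P1)")
      case XEmpty
      have nm1: "\<forall>B\<in>P1. \<not> mixed B" using p1.x_empty[OF XEmpty] by blast
      have "\<not> (\<exists>i j. is_edge S1 i j \<and> i < Min C0 \<and> Max C0 < j)" using d1_block_noedge[OF ref Z2(1,2) nm1] Z2(3) by simp
      thus ?thesis using XEmpty \<open>snd (psi n P2) = XBlock C0\<close> RHS_I5b[OF C0S] by simp
    next
      case (XEdge i j)
      have inn1: "inner P1 i j" using p1.x_edge[OF XEdge] .
      have e1: "is_edge S1 i j" using p1.inner_edge[OF inn1] .
      have d: "(i \<in> C0 \<and> j \<in> C0) \<or> (i < Min C0 \<and> Max C0 < j \<and>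
          (\<forall>i' j'. is_edge S1 i' j' \<and> i' < Min C0 \<and> Max C0 < j' \<longrightarrow> j - i \<le> j' - i'))"
        using d1_block_edge[OF ref Z2(1,2) inn1] Z2(3) by simp
      have "RHS S1 S2 (XEdge i j) (XBlock C0)"
        using d RHS_I4[OF C0S e1] RHS_I5a[OF C0S e1] by blast
      thus ?thesis using XEdge \<open>snd (psi n P2) = XBlock C0\<close> by simp
    next
      case (XBlock D)
      obtain Z1 where Z1: "Z1 \<in> P1" "uminus ` Z1 = Z1" "D = pp Z1" using p1.x_block[OF XBlock] by blast
      have DS: "D \<in> S1" using Z1 p1.zero_abs[OF Z1(1,2)] by (metis image_eqI)
      have "D \<subseteq> C0" using d1_block_zero[OF ref Z2(1,2) Z1(1,2)] Z1(3) Z2(3) by simp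
      hence "RHS S1 S2 (XBlock D) (XBlock C0)" using RHS_I3[OF C0S DS] by blast
      thus ?thesis using XBlock \<open>snd (psi n P2) = XBlock C0\<close> by simp
    qed
  qed
qed

lemma dir2: "refines S1 S2 \<Longrightarrow> RHS S1 S2 (snd (psi n P1)) (snd (psi n P2)) \<Longrightarrow> refines P1 P2"
proof -
  assume ref: "refines S1 S2" and r: "RHS S1 S2 (snd (psi n P1)) (snd (psi n P2))"
  show ?thesis
  proof (cases "snd (psi n P2)")
    case XEmpty
    have r': "RHS S1 S2 (snd (psi n P1)) XEmpty" using r XEmpty by simp
    have "snd (psi n P1) = XEmpty" using RHS_E0[OF r'] .
    thus ?thesis using dir2_empty[OF ref] p1.x_empty p2.x_empty XEmpty by blast
  next
    case (XEdge a b)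
    have inn2: "inner P2 a b" using p2.x_edge[OF XEdge] .
    have r2: "(\<exists>i j. snd (psi n P1) = XEdge i j \<and> is_edge S1 i j \<and> i \<le> a \<and> a < b \<and> b \<le> j \<and>
              (\<forall>i' j'. is_edge S1 i' j' \<and> i' \<le> a \<and> a < b \<and> b \<le> j' \<and> (i', j') \<noteq> (i, j)
                  \<longrightarrow> j - i < j' - i'))
          \<or> (snd (psi n P1) = XEmpty \<and> \<not> (\<exists>i j. is_edge S1 i j \<and> i \<le> a \<and> a < b \<and> b \<le> j))"
      using RHS_E2[of S1 S2 "snd (psi n P1)" a b] r XEdge by simp
    show ?thesis
    proof (rule dir2_edge[OF ref inn2])
      show "(\<exists>i j. inner P1 i j \<and> i \<le> a \<and> b \<le> j \<and>
              (\<forall>i' j'. is_edge S1 i' j' \<and> i' \<le> a \<and> a < b \<and> b \<le> j' \<and> (i', j') \<noteq> (i, j)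
                  \<longrightarrow> j - i < j' - i'))
          \<or> ((\<forall>B\<in>P1. \<not> mixed B) \<and> \<not> (\<exists>i j. is_edge S1 i j \<and> i \<le> a \<and> a < b \<and> b \<le> j))"
        using r2
      proof
        assume "\<exists>i j. snd (psi n P1) = XEdge i j \<and> is_edge S1 i j \<and> i \<le> a \<and> a < b \<and> b \<le> j \<and>
              (\<forall>i' j'. is_edge S1 i' j' \<and> i' \<le> a \<and> a < b \<and> b \<le> j' \<and> (i', j') \<noteq> (i, j)
                  \<longrightarrow> j - i < j' - i')"
        then obtain i j where ij: "snd (psi n P1) = XEdge i j" "i \<le> a" "b \<le> j"
          "\<forall>i' j'. is_edge S1 i' j' \<and> i' \<le> a \<and> a < b \<and> b \<le> j' \<and> (i', j') \<noteq> (i, j) \<longrightarrow> j - i < j' - i'"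
          by blast
        have "inner P1 i j" using p1.x_edge[OF ij(1)] .
        thus ?thesis using ij by blast
      next
        assume h: "snd (psi n P1) = XEmpty \<and> \<not> (\<exists>i j. is_edge S1 i j \<and> i \<le> a \<and> a < b \<and> b \<le> j)"
        have "\<forall>B\<in>P1. \<not> mixed B" using p1.x_empty h by blast
        thus ?thesis using h by blast
      qed
    qed
  next
    case (XBlock C0)
    obtain Z2 where Z2: "Z2 \<in> P2" "uminus ` Z2 = Z2" "C0 = pp Z2" using p2.x_block[OF XBlock] by blast
    have r3: "(\<exists>D. snd (psi n P1) = XBlock D \<and> D \<subseteq> C0)
      \<or> (\<exists>i j. snd (psi n P1) = XEdge i j \<and> i \<in> C0 \<and> j \<in> C0)
      \<or> (\<exists>i j. snd (psi n P1) = XEdge i j \<and> i < Min C0 \<and> Max C0 < j \<and>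
              (\<forall>i' j'. is_edge S1 i' j' \<and> i' < Min C0 \<and> Max C0 < j' \<longrightarrow> j - i \<le> j' - i'))
      \<or> (snd (psi n P1) = XEmpty \<and> \<not> (\<exists>i j. is_edge S1 i j \<and> i < Min C0 \<and> Max C0 < j))"
      using RHS_E3[of S1 S2 "snd (psi n P1)" C0] r XBlock by simp
    show ?thesis
    proof (cases "snd (psi n P1)")
      case XEmpty
      have h: "\<not> (\<exists>i j. is_edge S1 i j \<and> i < Min C0 \<and> Max C0 < j)" using r3 XEmpty by auto
      have nm: "\<forall>B\<in>P1. \<not> mixed B" using p1.x_empty[OF XEmpty] by blast
      show ?thesis using blk5b[OF ref Z2(1,2) nm] h Z2(3) by simp
    next
      case (XBlock D)
      have h: "D \<subseteq> C0" using r3 XBlock by auto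
      obtain Z1 where Z1: "Z1 \<in> P1" "uminus ` Z1 = Z1" "D = pp Z1" using p1.x_block[OF XBlock] by blast
      show ?thesis using blk3[OF ref Z2(1,2) Z1(1,2)] h Z1(3) Z2(3) by simp
    next
      case (XEdge i j)
      have inn1: "inner P1 i j" using p1.x_edge[OF XEdge] .
      have h: "(i \<in> C0 \<and> j \<in> C0) \<or> (i < Min C0 \<and> Max C0 < j \<and>
              (\<forall>i' j'. is_edge S1 i' j' \<and> i' < Min C0 \<and> Max C0 < j' \<longrightarrow> j - i \<le> j' - i'))"
        using r3 XEdge by auto
      thus ?thesis
      proof
        assume "i \<in> C0 \<and> j \<in> C0"
        thus ?thesis using blk4[OF ref Z2(1,2) inn1] Z2(3) by simp
      next
        assume h5: "i < Min C0 \<and> Max C0 < j \<and>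
              (\<forall>i' j'. is_edge S1 i' j' \<and> i' < Min C0 \<and> Max C0 < j' \<longrightarrow> j - i \<le> j' - i')"
        show ?thesis using blk5a[OF ref Z2(1,2) inn1] h5 Z2(3) by simp
      qed
    qed
  qed
qed

lemma main: "refines P1 P2 \<longleftrightarrow> refines S1 S2 \<and> RHS S1 S2 (snd (psi n P1)) (snd (psi n P2))"
  using dir1 dir2 ref_sig by blast

end

theorem proposition3p4:
  fixes n :: nat and \<pi>1 \<pi>2 \<sigma>1 \<sigma>2 :: "int set set" and x1 x2 :: xval
  assumes "0 < n"
    and "\<pi>1 \<in> NCB n" and "\<pi>2 \<in> NCB n"
    and "psi n \<pi>1 = (\<sigma>1, x1)" and "psi n \<pi>2 = (\<sigma>2, x2)"
  shows "refines \<pi>1 \<pi>2 \<longleftrightarrow>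
    refines \<sigma>1 \<sigma>2 \<and>
    ( (x1 = XEmpty \<and> x2 = XEmpty)
    \<or> (\<exists>a b. x2 = XEdge a b \<and> is_edge \<sigma>2 a b \<and>
         ((\<exists>i j. x1 = XEdge i j \<and> is_edge \<sigma>1 i j \<and> i \<le> a \<and> a < b \<and> b \<le> j \<and>
              (\<forall>i' j'. is_edge \<sigma>1 i' j' \<and> i' \<le> a \<and> a < b \<and> b \<le> j' \<and> (i', j') \<noteq> (i, j)
                  \<longrightarrow> j - i < j' - i'))
          \<or> (x1 = XEmpty \<and> \<not> (\<exists>i j. is_edge \<sigma>1 i j \<and> i \<le> a \<and> a < b \<and> b \<le> j))))
    \<or> (\<exists>C D. x2 = XBlock C \<and> C \<in> \<sigma>2 \<and> x1 = XBlock D \<and> D \<in> \<sigma>1 \<and> D \<subseteq> C)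
    \<or> (\<exists>C i j. x2 = XBlock C \<and> C \<in> \<sigma>2 \<and> x1 = XEdge i j \<and> is_edge \<sigma>1 i j \<and> i \<in> C \<and> j \<in> C)
    \<or> (\<exists>C. x2 = XBlock C \<and> C \<in> \<sigma>2 \<and>
         ((\<exists>i j. x1 = XEdge i j \<and> is_edge \<sigma>1 i j \<and> i < Min C \<and> Max C < j \<and>
              (\<forall>i' j'. is_edge \<sigma>1 i' j' \<and> i' < Min C \<and> Max C < j' \<longrightarrow> j - i \<le> j' - i'))
          \<or> (x1 = XEmpty \<and> \<not> (\<exists>i j. is_edge \<sigma>1 i j \<and> i < Min C \<and> Max C < j)))) )"
proof -
  interpret t: two n \<pi>1 \<pi>2 unfolding two_def ncb_def using assms(2,3) by simp
  have s1: "\<sigma>1 = (\<lambda>B. abs ` B) ` \<pi>1" using t.p1.sigma_eq assms(4) by simp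
  have s2: "\<sigma>2 = (\<lambda>B. abs ` B) ` \<pi>2" using t.p2.sigma_eq assms(5) by simp
  have y1: "x1 = snd (psi n \<pi>1)" using assms(4) by simp
  have y2: "x2 = snd (psi n \<pi>2)" using assms(5) by simp
  have "refines \<pi>1 \<pi>2 \<longleftrightarrow> refines \<sigma>1 \<sigma>2 \<and> RHS \<sigma>1 \<sigma>2 x1 x2"
    using t.main unfolding s1 s2 y1 y2 .
  thus ?thesis unfolding RHS_def .
qed

end
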